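(* Let $A\in\mathbb{R}^{n\times n}$ be an irreducible singular lower Hessenberg M-matrix of the form $A=I-T$ with $T$ column stochastic (so that $\mathbf{e}^TA=\mathbf{0}^T$, where $\mathbf{e}$ is the vector of all ones). Let $A_{n-1}=A[1\colon n-1,1\colon n-1]$ be its leading principal $(n-1)\times(n-1)$ submatrix, let $L=\begin{bmatrix} I_{n-1} & \mathbf{0}\\ \mathbf{e}^T & 1\end{bmatrix}$, and define \[ M'_J=L^{-1}\begin{bmatrix}\operatorname{diag}(A_{n-1}) & 0\\ 0^T & 1\end{bmatrix},\quad M'_{GS}=L^{-1}\begin{bmatrix}\operatorname{tril}(A_{n-1}) & 0\\ 0^T & 1\end{bmatrix}, \] \[ M'_{AGS}=L^{-1}\begin{bmatrix}\operatorname{triu}(A_{n-1}) & 0\\ 0^T & 1\end{bmatrix},\quad M'_{S}=L^{-1}\begin{bmatrix}\mathcal{S}(A_{n-1}) & 0\\ 0^T & 1\end{bmatrix}, \] where $\mathcal{S}(A_{n-1})$ is the stair matrix of first order or of second order generated by $A_{n-1}$, and set $N'_X=M'_X-A$ for $X\in\{J,GS,AGS,S\}$. Then \[ \gamma({M'_J}^{-1}N'_J)\geq \gamma({M'_{GS}}^{-1}N'_{GS})\geq \gamma({M'_S}^{-1}N'_S)\geq \gamma({M'_{AGS}}^{-1}N'_{AGS}). \]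
   Context: For a square matrix $P$ with spectrum $\sigma(P)$, $\gamma(P)=\max\{|\lambda| : \lambda\in\sigma(P),\ \lambda\neq 1\}$. $A$ is lower Hessenberg if $A_{ij}=0$ whenever $j>i+1$. $\operatorname{diag}(B)$ is the diagonal part of $B$; $\operatorname{tril}(B)$ (resp. $\operatorname{triu}(B)$) is the lower (resp. upper) triangular part of $B$ including the diagonal. For a square matrix $B$ of size $m$, let $\operatorname{tridiag}(B)$ keep the subdiagonal, diagonal and superdiagonal entries of $B$ and zero the rest; the stair matrix of first order generated by $B$ is obtained from $\operatorname{tridiag}(B)$ by setting entries $(i,i-1)$ and $(i,i+1)$ (when they exist) to zero for every odd $i$, and the stair matrix of second order by doing so for every even $i$. *)

theory Defs
  imports "Jordan_Normal_Form.Spectral_Radius" "Jordan_Normal_Form.Gauss_Jordan_Elimination"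
begin

(* All matrices are JNF matrices with 0-based indices: entry (i,j) of the paper is A $$ (i-1,j-1). *)

(* gamma(P) = max{|lambda| : lambda in spectrum(P), lambda \<noteq> 1}, spectrum taken over the complex numbers.
   Convention: the max of the empty set is taken to be 0 (all moduli are \<ge> 0). *)
definition gamma :: "real mat \<Rightarrow> real" where
  "gamma P = Max (insert 0 (cmod ` (spectrum (map_mat complex_of_real P) - {1})))"

definition lower_hessenberg :: "'a::zero mat \<Rightarrow> bool" where
  "lower_hessenberg A \<longleftrightarrow> (\<forall>i<dim_row A. \<forall>j<dim_col A. j > i + 1 \<longrightarrow> A $$ (i,j) = 0)"

definition nonneg_mat :: "real mat \<Rightarrow> bool" where
  "nonneg_mat B \<longleftrightarrow> (\<forall>i<dim_row B. \<forall>j<dim_col B. B $$ (i,j) \<ge> 0)"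

definition column_stochastic :: "real mat \<Rightarrow> bool" where
  "column_stochastic T \<longleftrightarrow> nonneg_mat T \<and>
     (\<forall>j<dim_col T. (\<Sum>i<dim_row T. T $$ (i,j)) = 1)"

(* irreducible: not permutation-similar to a block triangular matrix, i.e. there is no
   nonempty proper subset I of the index set with A(i,j) = 0 for all i in I, j not in I *)
definition irreducible_mat :: "'a::zero mat \<Rightarrow> bool" where
  "irreducible_mat A \<longleftrightarrow> square_mat A \<and>
     \<not> (\<exists>I. I \<noteq> {} \<and> I \<subset> {0..<dim_row A} \<and>
            (\<forall>i\<in>I. \<forall>j\<in>{0..<dim_row A} - I. A $$ (i,j) = 0))"

definition M_matrix :: "real mat \<Rightarrow> bool" where
  "M_matrix A \<longleftrightarrow> (\<exists>s B. B \<in> carrier_mat (dim_row A) (dim_row A) \<and> nonneg_mat B \<and>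
      A = s \<cdot>\<^sub>m 1\<^sub>m (dim_row A) - B \<and> s \<ge> spectral_radius (map_mat complex_of_real B))"

definition diag_part :: "'a::zero mat \<Rightarrow> 'a mat" where
  "diag_part B = mat (dim_row B) (dim_col B) (\<lambda>(i,j). if i = j then B $$ (i,j) else 0)"

definition tril :: "'a::zero mat \<Rightarrow> 'a mat" where
  "tril B = mat (dim_row B) (dim_col B) (\<lambda>(i,j). if j \<le> i then B $$ (i,j) else 0)"

definition triu :: "'a::zero mat \<Rightarrow> 'a mat" where
  "triu B = mat (dim_row B) (dim_col B) (\<lambda>(i,j). if i \<le> j then B $$ (i,j) else 0)"

definition tridiag :: "'a::zero mat \<Rightarrow> 'a mat" where
  "tridiag B = mat (dim_row B) (dim_col B)
     (\<lambda>(i,j). if i \<le> j + 1 \<and> j \<le> i + 1 then B $$ (i,j) else 0)"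

(* stair matrix of first order: from tridiag(B), zero the entries (i,i-1), (i,i+1) for every
   odd (1-based) row i, i.e. every even 0-based row index *)
definition stair1 :: "'a::zero mat \<Rightarrow> 'a mat" where
  "stair1 B = mat (dim_row B) (dim_col B)
     (\<lambda>(i,j). if i \<noteq> j \<and> odd (i + 1) then 0 else tridiag B $$ (i,j))"

(* stair matrix of second order: same for every even (1-based) row i *)
definition stair2 :: "'a::zero mat \<Rightarrow> 'a mat" where
  "stair2 B = mat (dim_row B) (dim_col B)
     (\<lambda>(i,j). if i \<noteq> j \<and> even (i + 1) then 0 else tridiag B $$ (i,j))"

definition lead_sub :: "'a mat \<Rightarrow> 'a mat" where
  "lead_sub A = mat (dim_row A - 1) (dim_col A - 1) (\<lambda>(i,j). A $$ (i,j))"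

definition Lmat :: "nat \<Rightarrow> real mat" where
  "Lmat n = four_block_mat (1\<^sub>m (n-1)) (0\<^sub>m (n-1) 1) (mat 1 (n-1) (\<lambda>_. 1)) (1\<^sub>m 1)"

definition blk :: "nat \<Rightarrow> real mat \<Rightarrow> real mat" where
  "blk n D = four_block_mat D (0\<^sub>m (n-1) 1) (0\<^sub>m 1 (n-1)) (1\<^sub>m 1)"

definition mat_inv :: "real mat \<Rightarrow> real mat" where
  "mat_inv M = the (mat_inverse M)"

definition Mprime :: "(real mat \<Rightarrow> real mat) \<Rightarrow> real mat \<Rightarrow> real mat" where
  "Mprime X A = mat_inv (Lmat (dim_row A)) * blk (dim_row A) (X (lead_sub A))"

definition iter_mat :: "(real mat \<Rightarrow> real mat) \<Rightarrow> real mat \<Rightarrow> real mat" where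
  "iter_mat X A = mat_inv (Mprime X A) * (Mprime X A - A)"

end

theory Submission
  imports Defs
begin

lemma P1:
  fixes Mf Nf :: "nat \<Rightarrow> nat \<Rightarrow> real" and v :: "nat \<Rightarrow> complex" and x :: "nat \<Rightarrow> real"
  assumes Mdiag: "\<forall>k<m. Mf k k \<ge> 0"
  and Moff: "\<forall>k<m. \<forall>j<m. j \<noteq> k \<longrightarrow> Mf k j \<le> 0"
  and Nnn: "\<forall>k<m. \<forall>j<m. Nf k j \<ge> 0"
  and xpos: "\<forall>j<m. x j > 0"
  and semi: "\<forall>k<m. \<alpha> * (\<Sum>j<m. Mf k j * x j) - (\<Sum>j<m. Nf k j * x j) > 0"
  and alpha: "\<alpha> > 0"
  and eig: "\<forall>k<m. (\<Sum>j<m. of_real (Nf k j) * v j) = lam * (\<Sum>j<m. of_real (Mf k j) * v j)"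
  and nz: "\<exists>j<m. v j \<noteq> 0"
  shows "cmod lam < \<alpha>"
proof (rule ccontr)
  assume "\<not> cmod lam < \<alpha>"
  hence la: "cmod lam \<ge> \<alpha>" by simp
  define F where "F = (\<lambda>j. cmod (v j) / x j)"
  have fin: "finite (F ` {..<m})" by simp
  from nz have ne: "F ` {..<m} \<noteq> {}" by auto
  define t where "t = Max (F ` {..<m})"
  obtain k where k: "k < m" "F k = t" using Max_in[OF fin ne] unfolding t_def by auto
  have tge: "cmod (v j) \<le> t * x j" if "j < m" for j
  proof -
    have "F j \<le> t" unfolding t_def using that fin by auto
    thus ?thesis using xpos that unfolding F_def by (simp add: divide_le_eq)
  qed
  from nz obtain j0 where j0: "j0 < m" "v j0 \<noteq> 0" by auto
  have "0 < F j0" unfolding F_def using j0 xpos by auto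
  also have "F j0 \<le> t" unfolding t_def using j0 fin by auto
  finally have tpos: "t > 0" .
  have vk: "cmod (v k) = t * x k" using k xpos unfolding F_def by auto
  let ?R = "{..<m} - {k}"
  have splitM: "(\<Sum>j<m. f j) = f k + (\<Sum>j\<in>?R. f j)" for f :: "nat \<Rightarrow> 'b::comm_monoid_add"
    using k by (simp add: sum.remove)
  have e: "(\<Sum>j<m. of_real (Nf k j) * v j) = lam * (of_real (Mf k k) * v k) + lam * (\<Sum>j\<in>?R. of_real (Mf k j) * v j)"
    using eig k splitM[of "\<lambda>j. of_real (Mf k j) * v j"] by (simp add: distrib_left)
  hence e2: "lam * (of_real (Mf k k) * v k) = (\<Sum>j<m. of_real (Nf k j) * v j) - lam * (\<Sum>j\<in>?R. of_real (Mf k j) * v j)"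
    by (simp add: algebra_simps)
  have "cmod lam * Mf k k * (t * x k) = cmod (lam * (of_real (Mf k k) * v k))"
    using Mdiag k vk by (simp add: norm_mult)
  also have "\<dots> \<le> cmod (\<Sum>j<m. of_real (Nf k j) * v j) + cmod (lam * (\<Sum>j\<in>?R. of_real (Mf k j) * v j))"
    unfolding e2 by (rule norm_triangle_ineq4)
  also have "cmod (\<Sum>j<m. of_real (Nf k j) * v j) \<le> (\<Sum>j<m. Nf k j * (t * x j))"
  proof -
    have "cmod (\<Sum>j<m. of_real (Nf k j) * v j) \<le> (\<Sum>j<m. cmod (of_real (Nf k j) * v j))" by (rule norm_sum)
    also have "\<dots> \<le> (\<Sum>j<m. Nf k j * (t * x j))"
    proof (rule sum_mono)
      fix j assume "j \<in> {..<m}"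
      hence j: "j < m" by auto
      show "cmod (of_real (Nf k j) * v j) \<le> Nf k j * (t * x j)"
        using Nnn k j tge[OF j] by (simp add: norm_mult mult_left_mono)
    qed
    finally show ?thesis .
  qed
  also have "cmod (lam * (\<Sum>j\<in>?R. of_real (Mf k j) * v j)) \<le> cmod lam * (\<Sum>j\<in>?R. - Mf k j * (t * x j))"
  proof -
    have "cmod (\<Sum>j\<in>?R. of_real (Mf k j) * v j) \<le> (\<Sum>j\<in>?R. cmod (of_real (Mf k j) * v j))" by (rule norm_sum)
    also have "\<dots> \<le> (\<Sum>j\<in>?R. - Mf k j * (t * x j))"
    proof (rule sum_mono)
      fix j assume "j \<in> ?R"
      hence j: "j < m" "j \<noteq> k" by auto
      have "Mf k j \<le> 0" using Moff k j by auto
      thus "cmod (of_real (Mf k j) * v j) \<le> - Mf k j * (t * x j)"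
        using tge[OF j(1)] by (simp add: norm_mult mult_left_mono_neg)
    qed
    finally show ?thesis by (simp add: norm_mult mult_left_mono)
  qed
  finally have ineq: "cmod lam * Mf k k * (t * x k) \<le> (\<Sum>j<m. Nf k j * (t * x j)) + cmod lam * (\<Sum>j\<in>?R. - Mf k j * (t * x j))"
    by simp
  have s1: "(\<Sum>j<m. Nf k j * (t * x j)) = t * (\<Sum>j<m. Nf k j * x j)"
    by (simp add: sum_distrib_left algebra_simps)
  have s2: "(\<Sum>j\<in>?R. - Mf k j * (t * x j)) = t * (\<Sum>j\<in>?R. - Mf k j * x j)"
    by (simp add: sum_distrib_left algebra_simps)
  define NX where "NX = (\<Sum>j<m. Nf k j * x j)"
  define MR where "MR = (\<Sum>j\<in>?R. - Mf k j * x j)"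
  have ineq2: "t * (cmod lam * Mf k k * x k) \<le> t * (NX + cmod lam * MR)"
    using ineq unfolding s1 s2 NX_def[symmetric] MR_def[symmetric] by (simp add: algebra_simps)
  have sm: "(\<Sum>j<m. Mf k j * x j) = Mf k k * x k - MR"
    unfolding MR_def using splitM[of "\<lambda>j. Mf k j * x j"] by (simp add: sum_negf)
  have NXnn: "NX \<ge> 0" unfolding NX_def using Nnn xpos k by (intro sum_nonneg) (auto intro: mult_nonneg_nonneg less_imp_le)
  have "\<alpha> * (Mf k k * x k - MR) > NX" using semi k sm unfolding NX_def by auto
  hence pos: "Mf k k * x k - MR > 0" using NXnn alpha
    by (smt (verit) mult_nonpos_nonneg mult_nonneg_nonpos)
  have "cmod lam * (Mf k k * x k - MR) \<ge> \<alpha> * (Mf k k * x k - MR)"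
    using la pos by (simp add: mult_right_mono)
  hence "cmod lam * (Mf k k * x k - MR) > NX" using \<open>\<alpha> * (Mf k k * x k - MR) > NX\<close> by linarith
  hence "cmod lam * Mf k k * x k > NX + cmod lam * MR" by (simp add: algebra_simps)
  hence "t * (cmod lam * Mf k k * x k) > t * (NX + cmod lam * MR)" using tpos by simp
  with ineq2 show False by simp
qed

lemma compare:
  fixes Bf fX fY :: "nat \<Rightarrow> nat \<Rightarrow> real" and r x :: "nat \<Rightarrow> real"
  assumes off: "\<forall>i<m. \<forall>j<m. j \<noteq> i \<longrightarrow> Bf i j \<le> 0"
  and hess: "\<forall>i<m. \<forall>j<m. j > i + 1 \<longrightarrow> Bf i j = 0"
  and diag: "\<forall>i<m. fX i i = fY i i"
  and rpos: "\<forall>j<m. r j > 0"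
  and cond: "\<forall>i<m. \<forall>j<m. j \<noteq> i \<longrightarrow> j \<le> i + 1 \<longrightarrow> fY i j * r j \<le> fX i j * r i"
  and xpos: "\<forall>j<m. x j > 0"
  and semi: "\<forall>i<m. (\<Sum>j<m. fX i j * Bf i j * x j) > 0"
  shows "\<exists>y. (\<forall>j<m. y j > 0) \<and> (\<forall>i<m. (\<Sum>j<m. fY i j * Bf i j * y j) > 0)"
proof (intro exI[of _ "\<lambda>j. r j * x j"] conjI allI impI)
  fix j assume "j < m" thus "r j * x j > 0" using rpos xpos by auto
next
  fix i assume i: "i < m"
  have "r i * (\<Sum>j<m. fX i j * Bf i j * x j) = (\<Sum>j<m. r i * (fX i j * Bf i j * x j))"
    by (simp add: sum_distrib_left)
  also have "\<dots> \<le> (\<Sum>j<m. fY i j * Bf i j * (r j * x j))"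
  proof (rule sum_mono)
    fix j assume "j \<in> {..<m}" hence j: "j < m" by auto
    show "r i * (fX i j * Bf i j * x j) \<le> fY i j * Bf i j * (r j * x j)"
    proof (cases "j = i")
      case True thus ?thesis using diag i by simp
    next
      case False
      show ?thesis
      proof (cases "j \<le> i + 1")
        case True
        have c: "fY i j * r j \<le> fX i j * r i" using cond i j False True by auto
        have b: "Bf i j * x j \<le> 0" using off i j False xpos
          by (simp add: mult_nonpos_nonneg less_imp_le)
        have "(fX i j * r i) * (Bf i j * x j) \<le> (fY i j * r j) * (Bf i j * x j)"
          using mult_right_mono_neg[OF c b] .
        thus ?thesis by (simp add: algebra_simps)
      next
        case False2: False
        thus ?thesis using hess i j by simp
      qed
    qed
  qed
  finally have "r i * (\<Sum>j<m. fX i j * Bf i j * x j) \<le> (\<Sum>j<m. fY i j * Bf i j * (r j * x j))" .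
  moreover have "r i * (\<Sum>j<m. fX i j * Bf i j * x j) > 0" using rpos semi i by simp
  ultimately show "(\<Sum>j<m. fY i j * Bf i j * (r j * x j)) > 0" by linarith
qed

lemma JAC:
  fixes Af :: "nat \<Rightarrow> nat \<Rightarrow> real" and u :: "nat \<Rightarrow> complex"
  assumes n: "n = Suc m"
  and colsum: "\<forall>j<n. (\<Sum>i<n. Af i j) = 0"
  and off: "\<forall>i<n. \<forall>j<n. i \<noteq> j \<longrightarrow> Af i j \<le> 0"
  and irr: "\<not> (\<exists>I. I \<noteq> {} \<and> I \<subset> {0..<n} \<and> (\<forall>i\<in>I. \<forall>j\<in>{0..<n} - I. Af i j = 0))"
  and nz: "\<exists>j<m. u j \<noteq> 0"
  and eig: "\<forall>j<m. (\<Sum>i\<in>{..<m} - {j}. of_real (- Af i j) * u i) = lam * (of_real (Af j j) * u j)"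
  shows "cmod lam < 1"
proof (rule ccontr)
  assume "\<not> cmod lam < 1"
  hence la: "cmod lam \<ge> 1" by simp
  define F where "F = (\<lambda>j. cmod (u j))"
  have fin: "finite (F ` {..<m})" by simp
  from nz have ne: "F ` {..<m} \<noteq> {}" by auto
  define t where "t = Max (F ` {..<m})"
  obtain k where k: "k < m" "F k = t" using Max_in[OF fin ne] unfolding t_def by auto
  have tge: "cmod (u j) \<le> t" if "j < m" for j
    using that fin unfolding t_def F_def by auto
  define I where "I = {j. j < m \<and> cmod (u j) = t}"
  have kI: "k \<in> I" using k unfolding I_def F_def by auto
  have key: "\<forall>i<n. i \<notin> I \<longrightarrow> Af i j = 0" if jI: "j \<in> I" for j
  proof -
    have j: "j < m" "cmod (u j) = t" using jI unfolding I_def by auto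
    let ?R = "{..<m} - {j}"
    have cs: "(\<Sum>i<n. Af i j) = Af j j + (\<Sum>i\<in>?R. Af i j) + Af m j"
    proof -
      have "(\<Sum>i<n. Af i j) = (\<Sum>i<m. Af i j) + Af m j" using n by simp
      also have "(\<Sum>i<m. Af i j) = Af j j + (\<Sum>i\<in>?R. Af i j)" using j by (simp add: sum.remove)
      finally show ?thesis .
    qed
    moreover have "(\<Sum>i<n. Af i j) = 0" using colsum j n by auto
    ultimately have cs2: "(\<Sum>i\<in>?R. - Af i j) = Af j j + Af m j" by (simp add: sum_negf)
    have offR: "\<forall>i\<in>?R. - Af i j \<ge> 0" using off j n by auto
    have Amj: "Af m j \<le> 0" using off j n by auto
    have Ajj: "Af j j \<ge> 0" using cs2 Amj offR by (smt (verit) sum_nonneg)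
    have "cmod lam * Af j j * t = cmod (lam * (of_real (Af j j) * u j))"
      using j Ajj by (simp add: norm_mult)
    also have "\<dots> = cmod (\<Sum>i\<in>?R. of_real (- Af i j) * u i)" using eig j by simp
    also have "\<dots> \<le> (\<Sum>i\<in>?R. cmod (of_real (- Af i j) * u i))" by (rule norm_sum)
    also have "\<dots> = (\<Sum>i\<in>?R. (- Af i j) * cmod (u i))"
      using offR by (intro sum.cong) (auto simp: norm_mult)
    finally have s1: "cmod lam * Af j j * t \<le> (\<Sum>i\<in>?R. (- Af i j) * cmod (u i))" .
    have s2: "(\<Sum>i\<in>?R. (- Af i j) * cmod (u i)) \<le> (\<Sum>i\<in>?R. (- Af i j) * t)"
      using offR tge by (intro sum_mono) (auto intro!: mult_left_mono_neg)
    have s3: "(\<Sum>i\<in>?R. (- Af i j) * t) = (Af j j + Af m j) * t"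
      using cs2 by (metis sum_distrib_right)
    have tnn: "t \<ge> 0" using tge k by (meson norm_ge_zero order_trans)
    have s4: "Af j j * t \<le> cmod lam * Af j j * t"
    proof -
      have p: "Af j j * t \<ge> 0" using Ajj tnn by simp
      show ?thesis using mult_right_mono[OF la p] by (simp add: mult.assoc)
    qed
    have Amj0: "Af m j * t = 0"
    proof -
      have "Af m j * t \<ge> 0" using s1 s2 s3 s4 by (simp add: algebra_simps)
      moreover have "Af m j * t \<le> 0" using Amj tnn by (simp add: mult_nonpos_nonneg)
      ultimately show ?thesis by simp
    qed
    have termnn: "\<forall>i\<in>?R. (- Af i j) * (t - cmod (u i)) \<ge> 0"
    proof
      fix i assume iR: "i \<in> ?R"
      have a: "- Af i j \<ge> 0" using offR iR by auto
      have b: "t - cmod (u i) \<ge> 0" using tge iR by auto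
      show "(- Af i j) * (t - cmod (u i)) \<ge> 0" using mult_nonneg_nonneg[OF a b] .
    qed
    have eqs: "(\<Sum>i\<in>?R. (- Af i j) * (t - cmod (u i))) = 0"
    proof -
      have "(\<Sum>i\<in>?R. (- Af i j) * (t - cmod (u i))) = (\<Sum>i\<in>?R. (- Af i j) * t) - (\<Sum>i\<in>?R. (- Af i j) * cmod (u i))"
        by (simp only: right_diff_distrib sum_subtractf)
      moreover have "(Af j j + Af m j) * t = Af j j * t" using Amj0 by (simp add: distrib_right)
      hence "(\<Sum>i\<in>?R. (- Af i j) * t) - (\<Sum>i\<in>?R. (- Af i j) * cmod (u i)) \<le> 0"
        using s1 s3 s4 by linarith
      moreover have "(\<Sum>i\<in>?R. (- Af i j) * (t - cmod (u i))) \<ge> 0"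
        using termnn by (intro sum_nonneg) auto
      ultimately show ?thesis by linarith
    qed
    have each: "\<forall>i\<in>?R. (- Af i j) * (t - cmod (u i)) = 0"
      using sum_nonneg_eq_0_iff[of ?R "\<lambda>i. (- Af i j) * (t - cmod (u i))"] eqs termnn
      by auto
    have tpos: "t > 0"
    proof -
      from nz obtain j0 where "j0 < m" "u j0 \<noteq> 0" by auto
      thus ?thesis using tge by (meson less_le_trans zero_less_norm_iff)
    qed
    show ?thesis
    proof (intro allI impI)
      fix i assume i: "i < n" "i \<notin> I"
      show "Af i j = 0"
      proof (cases "i = m")
        case True thus ?thesis using Amj0 tpos by simp
      next
        case False
        hence im: "i < m" using i n by auto
        hence "i \<noteq> j" using i j unfolding I_def by auto
        hence "(- Af i j) * (t - cmod (u i)) = 0" using each im by auto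
        moreover have "cmod (u i) \<noteq> t" using i im unfolding I_def by auto
        ultimately show ?thesis by simp
      qed
    qed
  qed
  define J where "J = {0..<n} - I"
  have "J \<noteq> {}" unfolding J_def I_def using n by auto
  moreover have "J \<subset> {0..<n}"
  proof -
    have "J \<subseteq> {0..<n}" unfolding J_def by blast
    moreover have "k \<notin> J" using kI unfolding J_def by blast
    moreover have "k \<in> {0..<n}" using k n by simp
    ultimately show ?thesis by blast
  qed
  moreover have "\<forall>i\<in>J. \<forall>j\<in>{0..<n} - J. Af i j = 0"
  proof (intro ballI)
    fix i j assume i: "i \<in> J" and j: "j \<in> {0..<n} - J"
    have jI: "j \<in> I" using j unfolding J_def by blast
    have "i < n" "i \<notin> I" using i unfolding J_def by auto
    thus "Af i j = 0" using key[OF jI] by blast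
  qed
  ultimately show False using irr by blast
qed

lemma mv_sum:
  assumes "A \<in> carrier_mat m m" "v \<in> carrier_vec m" "i < m"
  shows "(A *\<^sub>v v) $ i = (\<Sum>j<m. A $$ (i,j) * v $ j)"
  using assms by (simp add: scalar_prod_def atLeast0LessThan)

lemma inverse_exists:
  fixes M :: "'a :: field mat"
  assumes M: "M \<in> carrier_mat m m" and d: "det M \<noteq> 0"
  shows "\<exists>W. mat_inverse M = Some W \<and> W \<in> carrier_mat m m \<and> M * W = 1\<^sub>m m \<and> W * M = 1\<^sub>m m"
proof (cases "mat_inverse M")
  case None
  have "M \<in> Units (ring_mat TYPE('a) m ())" by (rule det_non_zero_imp_unit[OF M d])
  moreover have "M \<notin> Units (ring_mat TYPE('a) m ())" by (rule mat_inverse(1)[OF M None])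
  ultimately show ?thesis by contradiction
next
  case (Some W)
  show ?thesis using mat_inverse(2)[OF M Some] Some by (intro exI[of _ W]) simp
qed

lemma mono_det:
  fixes M :: "real mat"
  assumes M: "M \<in> carrier_mat m m"
  and mono: "\<forall>v \<in> carrier_vec m. (\<forall>i<m. (M *\<^sub>v v) $ i \<ge> 0) \<longrightarrow> (\<forall>i<m. v $ i \<ge> 0)"
  shows "det M \<noteq> 0"
proof
  assume "det M = 0"
  then obtain v where v: "v \<in> carrier_vec m" "v \<noteq> 0\<^sub>v m" "M *\<^sub>v v = 0\<^sub>v m"
    using det_0_iff_vec_prod_zero_field[OF M] by blast
  have z: "(\<Sum>j<m. M $$ (i,j) * v $ j) = 0" if "i < m" for i
    using mv_sum[OF M v(1) that] v(3) that by simp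
  have "\<forall>i<m. (M *\<^sub>v v) $ i \<ge> 0" using v by simp
  hence p: "\<forall>i<m. v $ i \<ge> 0" using mono v(1) by blast
  have mv: "- v \<in> carrier_vec m" using v by simp
  have "\<forall>i<m. (M *\<^sub>v (- v)) $ i \<ge> 0"
  proof (intro allI impI)
    fix i assume i: "i < m"
    have "(M *\<^sub>v (- v)) $ i = (\<Sum>j<m. M $$ (i,j) * (- v) $ j)" by (rule mv_sum[OF M mv i])
    also have "\<dots> = - (\<Sum>j<m. M $$ (i,j) * v $ j)" using v by (simp add: sum_negf)
    also have "\<dots> = 0" using z i by simp
    finally show "(M *\<^sub>v (- v)) $ i \<ge> 0" by simp
  qed
  hence q: "\<forall>i<m. (- v) $ i \<ge> 0" using mono mv by blast
  have dv: "dim_vec v = m" using v by simp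
  have vi: "v $ i = 0" if i: "i < m" for i
  proof -
    have "(- v) $ i = - (v $ i)" using i dv by simp
    thus ?thesis using p q i by force
  qed
  have "v = 0\<^sub>v m" by (rule eq_vecI) (use vi dv in auto)
  with v(2) show False by blast
qed


lemma smult_mv:
  assumes A: "(A :: 'a :: comm_ring_1 mat) \<in> carrier_mat m m" and v: "v \<in> carrier_vec m"
  shows "(c \<cdot>\<^sub>m A) *\<^sub>v v = c \<cdot>\<^sub>v (A *\<^sub>v v)"
proof (rule eq_vecI)
  fix i assume "i < dim_vec (c \<cdot>\<^sub>v (A *\<^sub>v v))"
  hence i: "i < m" using A by simp
  have "((c \<cdot>\<^sub>m A) *\<^sub>v v) $ i = (\<Sum>j<m. (c \<cdot>\<^sub>m A) $$ (i,j) * v $ j)"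
    using A v i by (intro mv_sum) auto
  also have "\<dots> = c * (\<Sum>j<m. A $$ (i,j) * v $ j)"
    using A i by (simp add: sum_distrib_left mult.assoc)
  also have "\<dots> = (c \<cdot>\<^sub>v (A *\<^sub>v v)) $ i" using mv_sum[OF A v i] A i by simp
  finally show "((c \<cdot>\<^sub>m A) *\<^sub>v v) $ i = (c \<cdot>\<^sub>v (A *\<^sub>v v)) $ i" .
qed (use A in simp)

lemma pow_comm:
  assumes A: "A \<in> carrier_mat m m"
  shows "A ^\<^sub>m k * A = A * A ^\<^sub>m k"
proof (induction k)
  case 0 thus ?case using A by simp
next
  case (Suc k)
  have "A ^\<^sub>m Suc k * A = (A ^\<^sub>m k * A) * A" by simp
  also have "\<dots> = (A * A ^\<^sub>m k) * A" using Suc by simp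
  also have "\<dots> = A * (A ^\<^sub>m k * A)" by (rule assoc_mult_mat[OF A pow_carrier_mat[OF A] A])
  finally show ?case by simp
qed

lemma smult_pow:
  assumes A: "(A :: 'a :: comm_ring_1 mat) \<in> carrier_mat m m"
  shows "(c \<cdot>\<^sub>m A) ^\<^sub>m k = (c ^ k) \<cdot>\<^sub>m (A ^\<^sub>m k)"
proof (induction k)
  case 0 thus ?case using A by (intro eq_matI) auto
next
  case (Suc k)
  have "(c \<cdot>\<^sub>m A) ^\<^sub>m Suc k = ((c ^ k) \<cdot>\<^sub>m (A ^\<^sub>m k)) * (c \<cdot>\<^sub>m A)" using Suc by simp
  also have "\<dots> = (c ^ k) \<cdot>\<^sub>m (A ^\<^sub>m k * (c \<cdot>\<^sub>m A))"
    using A by (intro mult_smult_assoc_mat) auto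
  also have "A ^\<^sub>m k * (c \<cdot>\<^sub>m A) = c \<cdot>\<^sub>m (A ^\<^sub>m k * A)"
    using A by (intro mult_smult_distrib) auto
  finally have e: "(c \<cdot>\<^sub>m A) ^\<^sub>m Suc k = c ^ k \<cdot>\<^sub>m (c \<cdot>\<^sub>m (A ^\<^sub>m k * A))" .
  show ?case unfolding e by (intro eq_matI) (auto simp: mult.commute mult.left_commute)
qed

lemma tele:
  fixes Y :: "nat \<Rightarrow> real"
  assumes aa: "al * a = 1"
  shows "al * (\<Sum>k<K. a ^ k * Y k) - (\<Sum>k<K. a ^ k * Y (Suc k)) = al * (Y 0 - a ^ K * Y K)"
proof (induction K)
  case 0 thus ?case by simp
next
  case (Suc K)
  have "al * (\<Sum>k<Suc K. a ^ k * Y k) - (\<Sum>k<Suc K. a ^ k * Y (Suc k))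
     = (al * (\<Sum>k<K. a ^ k * Y k) - (\<Sum>k<K. a ^ k * Y (Suc k))) + al * (a ^ K * Y K) - a ^ K * Y (Suc K)"
    by (simp add: algebra_simps)
  also have "\<dots> = al * Y 0 - a ^ K * Y (Suc K)" using Suc by (simp add: algebra_simps)
  also have "a ^ K * Y (Suc K) = al * (a ^ Suc K * Y (Suc K))"
    using aa by (simp add: algebra_simps)
  finally show ?case by (simp add: algebra_simps)
qed


lemma P2:
  fixes M N :: "real mat" and al :: real
  assumes M: "M \<in> carrier_mat m m" and N: "N \<in> carrier_mat m m"
  and m0: "m > 0"
  and mono: "\<forall>v \<in> carrier_vec m. (\<forall>i<m. (M *\<^sub>v v) $ i \<ge> 0) \<longrightarrow> (\<forall>i<m. v $ i \<ge> 0)"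
  and Moff: "\<forall>i<m. \<forall>j<m. i \<noteq> j \<longrightarrow> M $$ (i,j) \<le> 0"
  and Nnn: "\<forall>i<m. \<forall>j<m. N $$ (i,j) \<ge> 0"
  and al: "al > 0"
  and eigs: "\<And>lam v. v \<in> carrier_vec m \<Longrightarrow> v \<noteq> 0\<^sub>v m \<Longrightarrow>
     map_mat complex_of_real N *\<^sub>v v = lam \<cdot>\<^sub>v (map_mat complex_of_real M *\<^sub>v v) \<Longrightarrow> cmod lam < al"
  shows "\<exists>x \<in> carrier_vec m. (\<forall>i<m. x $ i > 0) \<and> (\<forall>i<m. ((al \<cdot>\<^sub>m M - N) *\<^sub>v x) $ i > 0)"
proof -
  obtain W where W: "W \<in> carrier_mat m m" "M * W = 1\<^sub>m m" "W * M = 1\<^sub>m m"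
    using inverse_exists[OF M mono_det[OF M mono]] by blast
  define H where "H = W * N"
  have H: "H \<in> carrier_mat m m" unfolding H_def using W N by simp
  have MH: "M * H = N" unfolding H_def
    using assoc_mult_mat[OF M W(1) N, symmetric] W N by simp
  have Hnn: "H $$ (i,j) \<ge> 0" if i: "i < m" and j: "j < m" for i j
  proof -
    have c: "col H j \<in> carrier_vec m" using H unfolding carrier_vec_def by simp
    have "M *\<^sub>v col H j = col N j" using col_mult2[OF M H j] MH by simp
    hence "\<forall>l<m. (M *\<^sub>v col H j) $ l \<ge> 0" using Nnn j N by simp
    hence "\<forall>l<m. col H j $ l \<ge> 0" using mono c by blast
    thus ?thesis using i j H by simp
  qed
  define Hc where "Hc = map_mat complex_of_real H"
  define Mc where "Mc = map_mat complex_of_real M"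
  define Nc where "Nc = map_mat complex_of_real N"
  have Hc: "Hc \<in> carrier_mat m m" unfolding Hc_def using H by simp
  have Mc: "Mc \<in> carrier_mat m m" unfolding Mc_def using M by simp
  have NcMH: "Nc = Mc * Hc" unfolding Nc_def Mc_def Hc_def
    using of_real_hom.mat_hom_mult[OF M H] MH by simp
  have eigH: "cmod mu < al" if v: "v \<in> carrier_vec m" "v \<noteq> 0\<^sub>v m" "Hc *\<^sub>v v = mu \<cdot>\<^sub>v v" for mu v
  proof -
    have "Nc *\<^sub>v v = Mc *\<^sub>v (Hc *\<^sub>v v)" unfolding NcMH using Mc Hc v by simp
    also have "\<dots> = mu \<cdot>\<^sub>v (Mc *\<^sub>v v)" unfolding v(3) using Mc v by (simp add: mult_mat_vec)
    finally show ?thesis using eigs[OF v(1,2)] unfolding Nc_def Mc_def by blast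
  qed
  define rho where "rho = spectral_radius Hc"
  have "rho \<in> norm ` spectrum Hc" unfolding rho_def by (rule spectral_radius_mem_max(1)[OF Hc m0])
  then obtain mu where mu: "mu \<in> spectrum Hc" "rho = cmod mu" by auto
  from mu(1) obtain v where v: "v \<in> carrier_vec m" "v \<noteq> 0\<^sub>v m" "Hc *\<^sub>v v = mu \<cdot>\<^sub>v v"
    unfolding spectrum_def eigenvalue_def eigenvector_def using Hc by auto
  have rho_al: "rho < al" using eigH[OF v] mu by simp
  have rho0: "rho \<ge> 0" using mu by simp
  define be where "be = (rho + al) / 2"
  have be: "be > 0" "be < al" "rho < be" unfolding be_def using rho_al rho0 by auto
  define Q where "Q = complex_of_real (1 / be) \<cdot>\<^sub>m Hc"
  have Q: "Q \<in> carrier_mat m m" unfolding Q_def using Hc by simp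
  have srQ: "spectral_radius Q < 1"
  proof -
    have "spectral_radius Q \<in> norm ` spectrum Q" by (rule spectral_radius_mem_max(1)[OF Q m0])
    then obtain nu where nu: "nu \<in> spectrum Q" "spectral_radius Q = cmod nu" by auto
    from nu(1) obtain u where u: "u \<in> carrier_vec m" "u \<noteq> 0\<^sub>v m" "Q *\<^sub>v u = nu \<cdot>\<^sub>v u"
      unfolding spectrum_def eigenvalue_def eigenvector_def using Q by auto
    have "Q *\<^sub>v u = complex_of_real (1 / be) \<cdot>\<^sub>v (Hc *\<^sub>v u)" unfolding Q_def using smult_mv[OF Hc u(1)] .
    hence "Hc *\<^sub>v u = complex_of_real be \<cdot>\<^sub>v (Q *\<^sub>v u)" using be(1) Hc u(1)
      by (simp add: smult_smult_assoc)
    hence "Hc *\<^sub>v u = (complex_of_real be * nu) \<cdot>\<^sub>v u" unfolding u(3) by (simp add: smult_smult_assoc)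
    hence "(complex_of_real be * nu) \<in> spectrum Hc"
      unfolding spectrum_def eigenvalue_def eigenvector_def using Hc u by auto
    hence "cmod (complex_of_real be * nu) \<le> rho" unfolding rho_def
      by (intro spectral_radius_mem_max(2)[OF Hc m0]) auto
    hence "be * cmod nu \<le> rho" using be(1) by (simp add: norm_mult)
    hence lt: "be * cmod nu < be * 1" using be(3) by linarith
    have "cmod nu < 1" using mult_less_cancel_left_pos[OF be(1), of "cmod nu" 1] lt by blast
    thus ?thesis using nu by simp
  qed
  obtain as where "char_poly Q = (\<Prod>a\<leftarrow>as. [:- a, 1:])" using char_poly_factorized[OF Q] by blast
  from jordan_nf_exists[OF Q this] have jnf: "\<exists>n_as. jordan_nf Q n_as" .
  obtain c where c: "\<And>k. norm_bound (Q ^\<^sub>m k) c"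
    using spectral_radius_jnf_norm_bound_less_1[OF Q srQ jnf] by blast
  have "cmod ((Q ^\<^sub>m 0) $$ (0,0)) \<le> c" using c[of 0] m0 Q unfolding norm_bound_def by (metis carrier_matD(1) carrier_matD(2) pow_carrier_mat)
  hence c0: "c \<ge> 0" by (meson norm_ge_zero order_trans)
  have Hbound: "\<bar>(H ^\<^sub>m k) $$ (i,j)\<bar> \<le> c * be ^ k" if i: "i < m" and j: "j < m" for i j k
  proof -
    have "Q ^\<^sub>m k = (complex_of_real (1/be)) ^ k \<cdot>\<^sub>m (Hc ^\<^sub>m k)" unfolding Q_def by (rule smult_pow[OF Hc])
    also have "Hc ^\<^sub>m k = map_mat complex_of_real (H ^\<^sub>m k)" unfolding Hc_def
      by (rule of_real_hom.mat_hom_pow[OF H, symmetric])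
    finally have Qk: "Q ^\<^sub>m k = (complex_of_real (1/be)) ^ k \<cdot>\<^sub>m map_mat complex_of_real (H ^\<^sub>m k)" .
    have "cmod ((Q ^\<^sub>m k) $$ (i,j)) \<le> c" using c[of k] i j Q unfolding norm_bound_def by simp
    moreover have nb: "cmod (1 / complex_of_real be) = 1/be" using be(1) by (simp add: norm_divide)
    ultimately have "(1/be) ^ k * \<bar>(H ^\<^sub>m k) $$ (i,j)\<bar> \<le> c" unfolding Qk using i j H be(1)
      by (simp add: norm_mult norm_power)
    hence "\<bar>(H ^\<^sub>m k) $$ (i,j)\<bar> \<le> c * be ^ k" using be(1)
      by (simp add: field_simps power_divide)
    thus ?thesis .
  qed
  define ones where "ones = vec m (\<lambda>_. 1::real)"
  have ones: "ones \<in> carrier_vec m" unfolding ones_def by simp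
  define w where "w = W *\<^sub>v ones"
  have w: "w \<in> carrier_vec m" unfolding w_def using W ones by simp
  have Mw: "M *\<^sub>v w = ones" unfolding w_def
    using assoc_mult_mat_vec[OF M W(1) ones, symmetric] W(2) ones by simp
  have wnn: "\<forall>i<m. w $ i \<ge> 0" using mono w Mw unfolding ones_def by simp
  have wpos: "w $ i > 0" if i: "i < m" for i
  proof -
    have "1 = (M *\<^sub>v w) $ i" using Mw i unfolding ones_def by simp
    also have "\<dots> = (\<Sum>j<m. M $$ (i,j) * w $ j)" by (rule mv_sum[OF M w i])
    also have "\<dots> = M $$ (i,i) * w $ i + (\<Sum>j\<in>{..<m} - {i}. M $$ (i,j) * w $ j)"
      using i by (simp add: sum.remove)
    also have "(\<Sum>j\<in>{..<m} - {i}. M $$ (i,j) * w $ j) \<le> 0"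
      using Moff wnn i by (intro sum_nonpos) (auto intro!: mult_nonpos_nonneg)
    finally have "M $$ (i,i) * w $ i \<ge> 1" by simp
    hence "w $ i \<noteq> 0" by auto
    thus ?thesis using wnn i by force
  qed
  define y where "y = (\<lambda>k. (H ^\<^sub>m k) *\<^sub>v w)"
  have y: "y k \<in> carrier_vec m" for k unfolding y_def by (rule mult_mat_vec_carrier[OF pow_carrier_mat[OF H] w])
  have y0: "y 0 = w" unfolding y_def using w H by simp
  have ySuc: "y (Suc k) = H *\<^sub>v y k" for k
  proof -
    have "y (Suc k) = (H ^\<^sub>m k * H) *\<^sub>v w" unfolding y_def by simp
    also have "\<dots> = (H * H ^\<^sub>m k) *\<^sub>v w" using pow_comm[OF H] by simp
    also have "\<dots> = H *\<^sub>v y k" unfolding y_def by (rule assoc_mult_mat_vec[OF H pow_carrier_mat[OF H] w])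
    finally show ?thesis .
  qed
  have ynn: "\<forall>i<m. y k $ i \<ge> 0" for k
  proof (induction k)
    case 0 thus ?case using y0 wnn by simp
  next
    case (Suc k)
    show ?case
    proof (intro allI impI)
      fix i assume i: "i < m"
      have "y (Suc k) $ i = (\<Sum>j<m. H $$ (i,j) * y k $ j)" unfolding ySuc by (rule mv_sum[OF H y i])
      also have "\<dots> \<ge> 0" using Suc Hnn i by (intro sum_nonneg) auto
      finally show "y (Suc k) $ i \<ge> 0" .
    qed
  qed
  define Sw where "Sw = (\<Sum>l<m. w $ l)"
  have Sw0: "Sw \<ge> 0" unfolding Sw_def using wnn by (intro sum_nonneg) auto
  have ybound: "\<bar>y k $ j\<bar> \<le> c * be ^ k * Sw" if j: "j < m" for k j
  proof -
    have "y k $ j = (\<Sum>l<m. (H ^\<^sub>m k) $$ (j,l) * w $ l)" unfolding y_def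
      by (rule mv_sum[OF pow_carrier_mat[OF H] w j])
    hence "\<bar>y k $ j\<bar> \<le> (\<Sum>l<m. \<bar>(H ^\<^sub>m k) $$ (j,l) * w $ l\<bar>)" by (simp add: sum_abs)
    also have "\<dots> \<le> (\<Sum>l<m. c * be ^ k * w $ l)"
    proof (rule sum_mono)
      fix l assume "l \<in> {..<m}" hence l: "l < m" by simp
      have "\<bar>(H ^\<^sub>m k) $$ (j,l) * w $ l\<bar> = \<bar>(H ^\<^sub>m k) $$ (j,l)\<bar> * w $ l"
        using wnn l by (simp add: abs_mult)
      also have "\<dots> \<le> c * be ^ k * w $ l" using Hbound[OF j l] wnn l by (simp add: mult_right_mono)
      finally show "\<bar>(H ^\<^sub>m k) $$ (j,l) * w $ l\<bar> \<le> c * be ^ k * w $ l" .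
    qed
    also have "\<dots> = c * be ^ k * Sw" unfolding Sw_def by (simp add: sum_distrib_left)
    finally show ?thesis .
  qed
  define SM where "SM = (\<Sum>i<m. \<Sum>j<m. \<bar>M $$ (i,j)\<bar>)"
  have Mybound: "\<bar>(M *\<^sub>v y k) $ i\<bar> \<le> SM * (c * be ^ k * Sw)" if i: "i < m" for i k
  proof -
    have "\<bar>(M *\<^sub>v y k) $ i\<bar> = \<bar>\<Sum>j<m. M $$ (i,j) * y k $ j\<bar>" using mv_sum[OF M y i] by simp
    also have "\<dots> \<le> (\<Sum>j<m. \<bar>M $$ (i,j) * y k $ j\<bar>)" by (rule sum_abs)
    also have "\<dots> \<le> (\<Sum>j<m. \<bar>M $$ (i,j)\<bar> * (c * be ^ k * Sw))"
      using ybound by (intro sum_mono) (auto simp: abs_mult intro!: mult_left_mono)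
    also have "\<dots> = (\<Sum>j<m. \<bar>M $$ (i,j)\<bar>) * (c * be ^ k * Sw)" by (simp add: sum_distrib_right)
    also have "\<dots> \<le> SM * (c * be ^ k * Sw)"
    proof (rule mult_right_mono)
      show "(\<Sum>j<m. \<bar>M $$ (i,j)\<bar>) \<le> SM" unfolding SM_def
        using i by (intro member_le_sum[where f = "\<lambda>i. \<Sum>j<m. \<bar>M $$ (i,j)\<bar>"]) (auto intro: sum_nonneg)
      show "0 \<le> c * be ^ k * Sw" using c0 be Sw0 by simp
    qed
    finally show ?thesis .
  qed
  define C where "C = SM * c * Sw"
  have SM0: "SM \<ge> 0" unfolding SM_def by (intro sum_nonneg) auto
  have C0: "C \<ge> 0" unfolding C_def using SM0 c0 Sw0 by simp
  define r where "r = be / al"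
  have r: "r > 0" "r < 1" unfolding r_def using be al by auto
  obtain K0 where K0: "r ^ K0 < 1 / (C + 1)" using real_arch_pow_inv[of "1 / (C + 1)" r] r C0 by auto
  define K where "K = Suc K0"
  have rK: "r ^ K \<le> r ^ K0" unfolding K_def using r by (simp add: mult_left_le_one_le less_imp_le)
  have CrK: "C * r ^ K < 1"
  proof -
    have "C * r ^ K \<le> (C + 1) * r ^ K" using r by simp
    also have "\<dots> \<le> (C + 1) * r ^ K0" using rK C0 by (simp add: mult_left_mono)
    also have "\<dots> < (C + 1) * (1 / (C + 1))" using K0 C0 by (intro mult_strict_left_mono) auto
    also have "\<dots> = 1" using C0 by simp
    finally show ?thesis .
  qed
  define a where "a = 1 / al"
  have aa: "al * a = 1" unfolding a_def using al by simp
  have a0: "a > 0" unfolding a_def using al by simp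
  have key: "a ^ K * (M *\<^sub>v y K) $ i < 1" if i: "i < m" for i
  proof -
    have "a ^ K * (M *\<^sub>v y K) $ i \<le> a ^ K * \<bar>(M *\<^sub>v y K) $ i\<bar>" using a0 by (simp add: mult_left_mono)
    also have "\<dots> \<le> a ^ K * (SM * (c * be ^ K * Sw))" using Mybound[OF i, of K] a0 by (simp add: mult_left_mono)
    also have "\<dots> = C * r ^ K" unfolding C_def r_def a_def by (simp add: power_divide field_simps)
    finally show ?thesis using CrK by linarith
  qed
  define x where "x = vec m (\<lambda>i. \<Sum>k<K. a ^ k * y k $ i)"
  have x: "x \<in> carrier_vec m" unfolding x_def by simp
  have xpos: "x $ i > 0" if i: "i < m" for i
  proof -
    have "a ^ 0 * y 0 $ i \<le> (\<Sum>k<K. a ^ k * y k $ i)"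
      using ynn a0 i unfolding K_def by (intro member_le_sum) auto
    thus ?thesis using wpos[OF i] y0 i unfolding x_def by simp
  qed
  have Hx: "(H *\<^sub>v x) $ i = (\<Sum>k<K. a ^ k * y (Suc k) $ i)" if i: "i < m" for i
  proof -
    have "(H *\<^sub>v x) $ i = (\<Sum>j<m. H $$ (i,j) * (\<Sum>k<K. a ^ k * y k $ j))"
      using mv_sum[OF H x i] unfolding x_def by simp
    also have "\<dots> = (\<Sum>k<K. a ^ k * (\<Sum>j<m. H $$ (i,j) * y k $ j))"
      by (simp add: sum_distrib_left sum.swap[of _ "{..<m}"] mult.left_commute)
    also have "\<dots> = (\<Sum>k<K. a ^ k * y (Suc k) $ i)"
      unfolding ySuc using mv_sum[OF H y i] by simp
    finally show ?thesis .
  qed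
  have final: "((al \<cdot>\<^sub>m M - N) *\<^sub>v x) $ i = al - al * (a ^ K * (M *\<^sub>v y K) $ i)" if i: "i < m" for i
  proof -
    have "(al \<cdot>\<^sub>m M - N) *\<^sub>v x = (al \<cdot>\<^sub>m M) *\<^sub>v x - N *\<^sub>v x"
      using M N x by (intro minus_mult_distrib_mat_vec) auto
    also have "(al \<cdot>\<^sub>m M) *\<^sub>v x = al \<cdot>\<^sub>v (M *\<^sub>v x)" by (rule smult_mv[OF M x])
    also have "N *\<^sub>v x = M *\<^sub>v (H *\<^sub>v x)" unfolding MH[symmetric] using M H x by simp
    finally have e: "((al \<cdot>\<^sub>m M - N) *\<^sub>v x) $ i = al * (M *\<^sub>v x) $ i - (M *\<^sub>v (H *\<^sub>v x)) $ i"
      using M i by simp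
    have Hxc: "H *\<^sub>v x \<in> carrier_vec m" using H x by simp
    have "al * (M *\<^sub>v x) $ i - (M *\<^sub>v (H *\<^sub>v x)) $ i
        = (\<Sum>j<m. M $$ (i,j) * (al * x $ j - (H *\<^sub>v x) $ j))"
      unfolding mv_sum[OF M x i] mv_sum[OF M Hxc i]
      by (simp add: sum_distrib_left sum_subtractf algebra_simps)
    also have "\<dots> = (\<Sum>j<m. M $$ (i,j) * (al * (w $ j - a ^ K * y K $ j)))"
    proof (rule sum.cong[OF refl])
      fix j assume "j \<in> {..<m}" hence j: "j < m" by simp
      have "al * x $ j - (H *\<^sub>v x) $ j = al * (\<Sum>k<K. a ^ k * y k $ j) - (\<Sum>k<K. a ^ k * y (Suc k) $ j)"
        unfolding Hx[OF j] using j unfolding x_def by simp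
      also have "\<dots> = al * (y 0 $ j - a ^ K * y K $ j)" by (rule tele[OF aa])
      finally show "M $$ (i,j) * (al * x $ j - (H *\<^sub>v x) $ j) = M $$ (i,j) * (al * (w $ j - a ^ K * y K $ j))"
        using y0 by simp
    qed
    also have "\<dots> = al * (\<Sum>j<m. M $$ (i,j) * w $ j) - al * (a ^ K * (\<Sum>j<m. M $$ (i,j) * y K $ j))"
      by (simp add: sum_distrib_left sum_subtractf algebra_simps)
    also have "(\<Sum>j<m. M $$ (i,j) * w $ j) = 1" using mv_sum[OF M w i] Mw i unfolding ones_def by simp
    also have "(\<Sum>j<m. M $$ (i,j) * y K $ j) = (M *\<^sub>v y K) $ i" using mv_sum[OF M y i] by simp
    finally show ?thesis using e by simp
  qed
  show ?thesis
  proof (intro bexI[OF _ x] conjI allI impI)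
    fix i assume i: "i < m"
    show "x $ i > 0" using xpos[OF i] .
    have "al * (a ^ K * (M *\<^sub>v y K) $ i) < al * 1" using key[OF i] al by simp
    thus "((al \<cdot>\<^sub>m M - N) *\<^sub>v x) $ i > 0" unfolding final[OF i] by simp
  qed
qed

lemma mm_sum:
  assumes "A \<in> carrier_mat nr n" "B \<in> carrier_mat n nc" "i < nr" "j < nc"
  shows "(A * B) $$ (i,j) = (\<Sum>k<n. A $$ (i,k) * B $$ (k,j))"
  using assms by (simp add: scalar_prod_def atLeast0LessThan)

lemma map_minus:
  assumes "A \<in> carrier_mat nr nc" "B \<in> carrier_mat nr nc"
  shows "map_mat complex_of_real (A - B) = map_mat complex_of_real A - map_mat complex_of_real B"
  using assms by (intro eq_matI) auto

lemma R_core: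
  fixes A M' W' L WL blk :: "'a::field mat"
  assumes A: "A \<in> carrier_mat n n" and M': "M' \<in> carrier_mat n n" and W': "W' \<in> carrier_mat n n"
  and L: "L \<in> carrier_mat n n" and WL: "WL \<in> carrier_mat n n" and blk: "blk \<in> carrier_mat n n"
  and W'M': "W' * M' = 1\<^sub>m n" and M'W': "M' * W' = 1\<^sub>m n"
  and LWL: "L * WL = 1\<^sub>m n" and WLL: "WL * L = 1\<^sub>m n" and M'def: "M' = WL * blk"
  and v: "v \<in> carrier_vec n"
  shows "(W' * (M' - A)) *\<^sub>v v = lam \<cdot>\<^sub>v v \<longleftrightarrow> (L * A) *\<^sub>v v = (1 - lam) \<cdot>\<^sub>v (blk *\<^sub>v v)"
proof
  assume h: "(W' * (M' - A)) *\<^sub>v v = lam \<cdot>\<^sub>v v"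
  have MA: "M' - A \<in> carrier_mat n n" using A by (rule minus_carrier_mat)
  have "M' *\<^sub>v ((W' * (M' - A)) *\<^sub>v v) = (M' - A) *\<^sub>v v"
    using assoc_mult_mat_vec[OF M' W' mult_mat_vec_carrier[OF MA v]] assoc_mult_mat_vec[OF W' MA v] M'W' MA v
    by simp
  also have "(M' - A) *\<^sub>v v = M' *\<^sub>v v - A *\<^sub>v v" using M' A v by (rule minus_mult_distrib_mat_vec)
  finally have e1: "M' *\<^sub>v v - A *\<^sub>v v = lam \<cdot>\<^sub>v (M' *\<^sub>v v)"
    unfolding h using mult_mat_vec[OF M' v] by simp
  have e2: "A *\<^sub>v v = (1 - lam) \<cdot>\<^sub>v (M' *\<^sub>v v)"
  proof (rule eq_vecI)
    fix i assume "i < dim_vec ((1 - lam) \<cdot>\<^sub>v (M' *\<^sub>v v))"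
    hence i: "i < n" using M' by simp
    have "(M' *\<^sub>v v - A *\<^sub>v v) $ i = (lam \<cdot>\<^sub>v (M' *\<^sub>v v)) $ i" using e1 by simp
    thus "(A *\<^sub>v v) $ i = ((1 - lam) \<cdot>\<^sub>v (M' *\<^sub>v v)) $ i" using i M' A by (simp add: algebra_simps)
  qed (use A M' in simp)
  have "(L * A) *\<^sub>v v = L *\<^sub>v (A *\<^sub>v v)" using L A v by simp
  also have "\<dots> = (1 - lam) \<cdot>\<^sub>v (L *\<^sub>v (M' *\<^sub>v v))" unfolding e2 using L M' v by (simp add: mult_mat_vec)
  also have "L *\<^sub>v (M' *\<^sub>v v) = blk *\<^sub>v v" unfolding M'def
    using assoc_mult_mat_vec[OF L WL mult_mat_vec_carrier[OF blk v]] assoc_mult_mat_vec[OF WL blk v] LWL blk v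
    by simp
  finally show "(L * A) *\<^sub>v v = (1 - lam) \<cdot>\<^sub>v (blk *\<^sub>v v)" .
next
  assume h: "(L * A) *\<^sub>v v = (1 - lam) \<cdot>\<^sub>v (blk *\<^sub>v v)"
  have "A *\<^sub>v v = WL *\<^sub>v ((L * A) *\<^sub>v v)"
    using assoc_mult_mat_vec[OF WL L mult_mat_vec_carrier[OF A v]] assoc_mult_mat_vec[OF L A v] WLL A v
    by simp
  also have "\<dots> = (1 - lam) \<cdot>\<^sub>v (M' *\<^sub>v v)" unfolding h M'def using WL blk v
    by (simp add: mult_mat_vec)
  finally have e2: "A *\<^sub>v v = (1 - lam) \<cdot>\<^sub>v (M' *\<^sub>v v)" .
  have MA: "M' - A \<in> carrier_mat n n" using A by (rule minus_carrier_mat)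
  have "(M' - A) *\<^sub>v v = M' *\<^sub>v v - A *\<^sub>v v" using M' A v by (rule minus_mult_distrib_mat_vec)
  also have "\<dots> = lam \<cdot>\<^sub>v (M' *\<^sub>v v)"
  proof (rule eq_vecI)
    fix i assume "i < dim_vec (lam \<cdot>\<^sub>v (M' *\<^sub>v v))"
    hence i: "i < n" using M' by simp
    show "(M' *\<^sub>v v - A *\<^sub>v v) $ i = (lam \<cdot>\<^sub>v (M' *\<^sub>v v)) $ i"
      using i M' A unfolding e2 by (simp add: algebra_simps)
  qed (use A M' in simp)
  finally have e3: "(M' - A) *\<^sub>v v = lam \<cdot>\<^sub>v (M' *\<^sub>v v)" .
  have "(W' * (M' - A)) *\<^sub>v v = W' *\<^sub>v ((M' - A) *\<^sub>v v)" using W' MA v by simp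
  also have "\<dots> = lam \<cdot>\<^sub>v (W' *\<^sub>v (M' *\<^sub>v v))" unfolding e3 using W' M' v by (simp add: mult_mat_vec)
  also have "W' *\<^sub>v (M' *\<^sub>v v) = v" using assoc_mult_mat_vec[OF W' M' v] W'M' v by simp
  finally show "(W' * (M' - A)) *\<^sub>v v = lam \<cdot>\<^sub>v v" .
qed

definition MKg :: "(nat \<Rightarrow> nat \<Rightarrow> bool) \<Rightarrow> real mat \<Rightarrow> real mat" where
  "MKg K B = mat (dim_row B) (dim_col B) (\<lambda>(i,j). if K i j then B $$ (i,j) else 0)"

lemma hom_inv:
  assumes "A \<in> carrier_mat n n" "B \<in> carrier_mat n n" "A * B = 1\<^sub>m n"
  shows "map_mat complex_of_real A * map_mat complex_of_real B = 1\<^sub>m n"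
proof -
  have "map_mat complex_of_real A * map_mat complex_of_real B = map_mat complex_of_real (A * B)"
    by (rule sym, rule of_real_hom.mat_hom_mult[OF assms(1,2)])
  also have "\<dots> = 1\<^sub>m n" unfolding assms(3) by (intro eq_matI) auto
  finally show ?thesis .
qed

locale setting =
  fixes n m :: nat and A :: "real mat"
  assumes nm: "n = Suc m" and m1: "m \<ge> 1"
  and A: "A \<in> carrier_mat n n"
  and offA: "\<forall>i<n. \<forall>j<n. i \<noteq> j \<longrightarrow> A $$ (i,j) \<le> 0"
  and colsum: "\<forall>j<n. (\<Sum>i<n. A $$ (i,j)) = 0"
  and irr: "\<not> (\<exists>I. I \<noteq> {} \<and> I \<subset> {0..<n} \<and> (\<forall>i\<in>I. \<forall>j\<in>{0..<n} - I. A $$ (i,j) = 0))"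
  and hess: "\<forall>i<n. \<forall>j<n. j > i + 1 \<longrightarrow> A $$ (i,j) = 0"
begin

abbreviation "B \<equiv> lead_sub A"

lemma B: "B \<in> carrier_mat m m"
  using A nm unfolding lead_sub_def by auto

lemma B_idx: "i < m \<Longrightarrow> j < m \<Longrightarrow> B $$ (i,j) = A $$ (i,j)"
  using A nm unfolding lead_sub_def by auto

lemma Adiag_pos: assumes i: "i < n" shows "A $$ (i,i) > 0"
proof -
  let ?R = "{..<n} - {i}"
  have "(\<Sum>k<n. A $$ (k,i)) = A $$ (i,i) + (\<Sum>k\<in>?R. A $$ (k,i))" using i by (simp add: sum.remove)
  hence e: "A $$ (i,i) = (\<Sum>k\<in>?R. - A $$ (k,i))" using colsum i by (simp add: sum_negf)
  have nn: "\<forall>k\<in>?R. - A $$ (k,i) \<ge> 0" using offA i by auto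
  have "A $$ (i,i) \<ge> 0" unfolding e using nn by (intro sum_nonneg) auto
  moreover have "A $$ (i,i) \<noteq> 0"
  proof
    assume z: "A $$ (i,i) = 0"
    have s0: "(\<Sum>k\<in>?R. - A $$ (k,i)) = 0" using e z by simp
    have "\<forall>k\<in>?R. - A $$ (k,i) = 0" using sum_nonneg_eq_0_iff[of ?R "\<lambda>k. - A $$ (k,i)"] nn s0 by simp
    hence col0: "\<forall>k<n. k \<noteq> i \<longrightarrow> A $$ (k,i) = 0" by auto
    define I where "I = {0..<n} - {i}"
    define i0 :: nat where "i0 = (if i = 0 then 1 else 0)"
    have "i0 < n" unfolding i0_def using nm m1 by simp
    moreover have "i0 \<noteq> i" unfolding i0_def by simp
    ultimately have "i0 \<in> I" unfolding I_def by simp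
    hence ne: "I \<noteq> {}" by blast
    have sub: "I \<subset> {0..<n}"
    proof -
      have "i \<in> {0..<n}" using i by simp
      moreover have "i \<notin> I" unfolding I_def by simp
      moreover have "I \<subseteq> {0..<n}" unfolding I_def by blast
      ultimately show ?thesis by blast
    qed
    have zer: "\<forall>k\<in>I. \<forall>j\<in>{0..<n} - I. A $$ (k,j) = 0"
    proof (intro ballI)
      fix k j assume k: "k \<in> I" and j: "j \<in> {0..<n} - I"
      have "j = i" using j unfolding I_def by auto
      thus "A $$ (k,j) = 0" using k col0 unfolding I_def by auto
    qed
    have "\<exists>I. I \<noteq> {} \<and> I \<subset> {0..<n} \<and> (\<forall>i\<in>I. \<forall>j\<in>{0..<n} - I. A $$ (i,j) = 0)"
      by (rule exI[of _ I]) (use ne sub zer in simp)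
    from irr this show False by (rule notE)
  qed
  ultimately show ?thesis by simp
qed

lemma MK: "MKg K B \<in> carrier_mat m m"
  using B unfolding MKg_def by auto

lemma MK_idx: "i < m \<Longrightarrow> j < m \<Longrightarrow> MKg K B $$ (i,j) = (if K i j then A $$ (i,j) else 0)"
  using B B_idx unfolding MKg_def by auto

definition pencil :: "(nat \<Rightarrow> nat \<Rightarrow> bool) \<Rightarrow> complex \<Rightarrow> bool" where
  "pencil K lam = (\<exists>u \<in> carrier_vec m. u \<noteq> 0\<^sub>v m \<and>
     map_mat complex_of_real (MKg K B - B) *\<^sub>v u = lam \<cdot>\<^sub>v (map_mat complex_of_real (MKg K B) *\<^sub>v u))"

lemma L_eq: "Lmat n = four_block_mat (1\<^sub>m m) (0\<^sub>m m 1) (mat 1 m (\<lambda>_. 1)) (1\<^sub>m 1)"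
  unfolding Lmat_def using nm by simp

lemma L: "Lmat n \<in> carrier_mat n n" unfolding L_eq using nm by auto

lemma L_idx: "i < n \<Longrightarrow> k < n \<Longrightarrow> Lmat n $$ (i,k) = (if i < m then (if i = k then 1 else 0) else 1)"
  unfolding L_eq using nm by auto

lemma det_L: "det (Lmat n) = 1"
  unfolding L_eq by (subst det_four_block_mat_upper_right_zero_col) auto

lemma LA_idx: assumes i: "i < n" and j: "j < n"
  shows "(Lmat n * A) $$ (i,j) = (if i < m then A $$ (i,j) else 0)"
proof -
  have "(Lmat n * A) $$ (i,j) = (\<Sum>k<n. Lmat n $$ (i,k) * A $$ (k,j))" by (rule mm_sum[OF L A i j])
  also have "\<dots> = (\<Sum>k<n. (if i < m then (if i = k then 1 else 0) else 1) * A $$ (k,j))"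
    using L_idx i by (intro sum.cong) auto
  also have "\<dots> = (if i < m then A $$ (i,j) else 0)"
  proof (cases "i < m")
    case True
    have "(\<Sum>k<n. (if i < m then (if i = k then 1 else 0) else 1) * A $$ (k,j)) = (\<Sum>k<n. if k = i then A $$ (k,j) else 0)"
      using True by (intro sum.cong) auto
    also have "\<dots> = A $$ (i,j)" using i by simp
    finally show ?thesis using True by simp
  next
    case False thus ?thesis using colsum j by simp
  qed
  finally show ?thesis .
qed

lemma blk_carrier: "blk n (MKg K B) \<in> carrier_mat n n"
  unfolding blk_def using MK[of K] nm by auto

lemma blk_idx: "i < n \<Longrightarrow> j < n \<Longrightarrow> blk n (MKg K B) $$ (i,j) =
   (if i < m then (if j < m then MKg K B $$ (i,j) else 0) else (if j < m then 0 else 1))"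
  unfolding blk_def using MK[of K] nm by auto

lemma det_blk: "det (blk n (MKg K B)) = det (MKg K B)"
  unfolding blk_def using nm MK[of K] by (subst det_four_block_mat_upper_right_zero_col) auto


lemma reduction:
  assumes KX: "X (lead_sub A) = MKg K B" and dK: "det (MKg K B) \<noteq> 0"
  shows "lam \<in> spectrum (map_mat complex_of_real (iter_mat X A)) \<longleftrightarrow>
    (\<exists>v \<in> carrier_vec n. v \<noteq> 0\<^sub>v n \<and>
      (\<forall>i<n. (if i < m then (\<Sum>j<n. complex_of_real (A $$ (i,j)) * v $ j) else 0) =
         (1 - lam) * (if i < m then (\<Sum>j<m. complex_of_real (MKg K B $$ (i,j)) * v $ j) else v $ m)))"
proof -
  define L where "L = Lmat n"
  have Lc: "L \<in> carrier_mat n n" unfolding L_def by (rule L)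
  obtain WL where WL: "mat_inverse L = Some WL" "WL \<in> carrier_mat n n" "L * WL = 1\<^sub>m n" "WL * L = 1\<^sub>m n"
    using inverse_exists[OF Lc] det_L unfolding L_def by auto
  define bk where "bk = blk n (MKg K B)"
  have bk: "bk \<in> carrier_mat n n" unfolding bk_def by (rule blk_carrier)
  define M' where "M' = WL * bk"
  have M': "M' \<in> carrier_mat n n" unfolding M'_def using WL bk by simp
  have dimA: "dim_row A = n" using A by simp
  have Mp: "Mprime X A = M'" unfolding Mprime_def M'_def bk_def mat_inv_def dimA KX
    using WL L_def by simp
  have "det L * det WL = 1" using det_mult[OF Lc WL(2)] WL(3) by (simp add: of_real_hom.mat_hom_one)
  hence dWL: "det WL \<noteq> 0" by auto
  have "det M' = det WL * det bk" unfolding M'_def by (rule det_mult[OF WL(2) bk])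
  hence dM': "det M' \<noteq> 0" using dWL dK det_blk unfolding bk_def by simp
  obtain W' where W': "mat_inverse M' = Some W'" "W' \<in> carrier_mat n n" "M' * W' = 1\<^sub>m n" "W' * M' = 1\<^sub>m n"
    using inverse_exists[OF M' dM'] by auto
  have G: "iter_mat X A = W' * (M' - A)" unfolding iter_mat_def Mp mat_inv_def using W' by simp
  let ?c = "map_mat complex_of_real"
  have MAc: "M' - A \<in> carrier_mat n n" using A by (rule minus_carrier_mat)
  have Gc: "?c (iter_mat X A) = ?c W' * (?c M' - ?c A)"
    unfolding G of_real_hom.mat_hom_mult[OF W'(2) MAc] map_minus[OF M' A] ..
  have c1: "?c W' * ?c M' = 1\<^sub>m n" by (rule hom_inv[OF W'(2) M' W'(4)])
  have c2: "?c M' * ?c W' = 1\<^sub>m n" by (rule hom_inv[OF M' W'(2) W'(3)])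
  have c3: "?c L * ?c WL = 1\<^sub>m n" by (rule hom_inv[OF Lc WL(2) WL(3)])
  have c4: "?c WL * ?c L = 1\<^sub>m n" by (rule hom_inv[OF WL(2) Lc WL(4)])
  have c5: "?c M' = ?c WL * ?c bk" unfolding M'_def using of_real_hom.mat_hom_mult[OF WL(2) bk] .
  have c6: "?c L * ?c A = ?c (L * A)" by (rule sym, rule of_real_hom.mat_hom_mult[OF Lc A])
  have core: "(?c W' * (?c M' - ?c A)) *\<^sub>v v = lam \<cdot>\<^sub>v v \<longleftrightarrow> (?c L * ?c A) *\<^sub>v v = (1 - lam) \<cdot>\<^sub>v (?c bk *\<^sub>v v)"
    if v: "v \<in> carrier_vec n" for v
    by (rule R_core[of "?c A" n "?c M'" "?c W'" "?c L" "?c WL" "?c bk"])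
      (use A M' W' Lc WL bk c1 c2 c3 c4 c5 v in auto)
  have ent: "(?c (L * A) *\<^sub>v v = (1 - lam) \<cdot>\<^sub>v (?c bk *\<^sub>v v)) \<longleftrightarrow>
      (\<forall>i<n. (if i < m then (\<Sum>j<n. complex_of_real (A $$ (i,j)) * v $ j) else 0) =
         (1 - lam) * (if i < m then (\<Sum>j<m. complex_of_real (MKg K B $$ (i,j)) * v $ j) else v $ m))"
    if v: "v \<in> carrier_vec n" for v
  proof -
    have LAc: "?c (L * A) \<in> carrier_mat n n" using Lc A by simp
    have bkc: "?c bk \<in> carrier_mat n n" using bk by simp
    have e1: "(?c (L * A) *\<^sub>v v) $ i = (if i < m then (\<Sum>j<n. complex_of_real (A $$ (i,j)) * v $ j) else 0)"
      if i: "i < n" for i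
    proof -
      have "(?c (L * A) *\<^sub>v v) $ i = (\<Sum>j<n. ?c (L * A) $$ (i,j) * v $ j)" by (rule mv_sum[OF LAc v i])
      also have "\<dots> = (\<Sum>j<n. complex_of_real (if i < m then A $$ (i,j) else 0) * v $ j)"
        using LA_idx[OF i] Lc A i unfolding L_def by (intro sum.cong) auto
      finally show ?thesis by (cases "i < m") auto
    qed
    have e2: "(?c bk *\<^sub>v v) $ i = (if i < m then (\<Sum>j<m. complex_of_real (MKg K B $$ (i,j)) * v $ j) else v $ m)"
      if i: "i < n" for i
    proof -
      have "(?c bk *\<^sub>v v) $ i = (\<Sum>j<n. ?c bk $$ (i,j) * v $ j)" by (rule mv_sum[OF bkc v i])
      also have "\<dots> = (\<Sum>j<n. complex_of_real (if i < m then (if j < m then MKg K B $$ (i,j) else 0) else (if j < m then 0 else 1)) * v $ j)"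
        using blk_idx i bk unfolding bk_def by (intro sum.cong) auto
      also have "\<dots> = (\<Sum>j<m. complex_of_real (if i < m then (if j < m then MKg K B $$ (i,j) else 0) else (if j < m then 0 else 1)) * v $ j)
          + complex_of_real (if i < m then 0 else 1) * v $ m"
        unfolding nm by simp
      also have "\<dots> = (if i < m then (\<Sum>j<m. complex_of_real (MKg K B $$ (i,j)) * v $ j) else v $ m)"
        by (cases "i < m") auto
      finally show ?thesis .
    qed
    show ?thesis
    proof
      assume h: "?c (L * A) *\<^sub>v v = (1 - lam) \<cdot>\<^sub>v (?c bk *\<^sub>v v)"
      show "\<forall>i<n. (if i < m then (\<Sum>j<n. complex_of_real (A $$ (i,j)) * v $ j) else 0) =
         (1 - lam) * (if i < m then (\<Sum>j<m. complex_of_real (MKg K B $$ (i,j)) * v $ j) else v $ m)"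
      proof (intro allI impI)
        fix i assume i: "i < n"
        have "(?c (L * A) *\<^sub>v v) $ i = ((1 - lam) \<cdot>\<^sub>v (?c bk *\<^sub>v v)) $ i" using h by simp
        thus "(if i < m then (\<Sum>j<n. complex_of_real (A $$ (i,j)) * v $ j) else 0) =
         (1 - lam) * (if i < m then (\<Sum>j<m. complex_of_real (MKg K B $$ (i,j)) * v $ j) else v $ m)"
          using e1[OF i] e2[OF i] i bk by simp
      qed
    next
      assume h: "\<forall>i<n. (if i < m then (\<Sum>j<n. complex_of_real (A $$ (i,j)) * v $ j) else 0) =
         (1 - lam) * (if i < m then (\<Sum>j<m. complex_of_real (MKg K B $$ (i,j)) * v $ j) else v $ m)"
      show "?c (L * A) *\<^sub>v v = (1 - lam) \<cdot>\<^sub>v (?c bk *\<^sub>v v)"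
      proof (rule eq_vecI)
        fix i assume "i < dim_vec ((1 - lam) \<cdot>\<^sub>v (?c bk *\<^sub>v v))"
        hence i: "i < n" using bk by simp
        show "(?c (L * A) *\<^sub>v v) $ i = ((1 - lam) \<cdot>\<^sub>v (?c bk *\<^sub>v v)) $ i"
          using e1[OF i] e2[OF i] i bk h by simp
      qed (use Lc bk in simp)
    qed
  qed
  have dG: "dim_row (?c (iter_mat X A)) = n" unfolding G using W' by simp
  have sp: "lam \<in> spectrum (?c (iter_mat X A)) \<longleftrightarrow> (\<exists>v. v \<in> carrier_vec n \<and> v \<noteq> 0\<^sub>v n \<and> ?c (iter_mat X A) *\<^sub>v v = lam \<cdot>\<^sub>v v)"
    unfolding spectrum_def eigenvalue_def eigenvector_def dG by simp
  have equiv: "(?c (iter_mat X A) *\<^sub>v v = lam \<cdot>\<^sub>v v) \<longleftrightarrow>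
      (\<forall>i<n. (if i < m then (\<Sum>j<n. complex_of_real (A $$ (i,j)) * v $ j) else 0) =
         (1 - lam) * (if i < m then (\<Sum>j<m. complex_of_real (MKg K B $$ (i,j)) * v $ j) else v $ m))"
    if v: "v \<in> carrier_vec n" for v
    unfolding Gc core[OF v] c6 ent[OF v] ..
  show ?thesis unfolding sp using equiv by blast
qed

end

lemma mono_rank:
  fixes M :: "real mat" and rk :: "nat \<Rightarrow> nat"
  assumes M: "M \<in> carrier_mat m m"
  and dpos: "\<forall>i<m. M $$ (i,i) > 0"
  and off: "\<forall>i<m. \<forall>j<m. i \<noteq> j \<longrightarrow> M $$ (i,j) \<le> 0"
  and rank: "\<forall>i<m. \<forall>j<m. i \<noteq> j \<longrightarrow> M $$ (i,j) \<noteq> 0 \<longrightarrow> rk j < rk i"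
  shows "\<forall>v \<in> carrier_vec m. (\<forall>i<m. (M *\<^sub>v v) $ i \<ge> 0) \<longrightarrow> (\<forall>i<m. v $ i \<ge> 0)"
proof (intro ballI impI)
  fix v :: "real vec" assume v: "v \<in> carrier_vec m" and h: "\<forall>i<m. (M *\<^sub>v v) $ i \<ge> 0"
  have "i < m \<longrightarrow> v $ i \<ge> 0" for i
  proof (induction i rule: measure_induct_rule[of rk])
    case (less i)
    show ?case
    proof
      assume i: "i < m"
      have "0 \<le> (M *\<^sub>v v) $ i" using h i by simp
      also have "\<dots> = (\<Sum>j<m. M $$ (i,j) * v $ j)" by (rule mv_sum[OF M v i])
      also have "\<dots> = M $$ (i,i) * v $ i + (\<Sum>j\<in>{..<m} - {i}. M $$ (i,j) * v $ j)"
        using i by (simp add: sum.remove)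
      also have "(\<Sum>j\<in>{..<m} - {i}. M $$ (i,j) * v $ j) \<le> 0"
      proof (rule sum_nonpos)
        fix j assume j: "j \<in> {..<m} - {i}"
        show "M $$ (i,j) * v $ j \<le> 0"
        proof (cases "M $$ (i,j) = 0")
          case True thus ?thesis by simp
        next
          case False
          hence "rk j < rk i" using rank i j by auto
          hence "v $ j \<ge> 0" using less j by auto
          moreover have "M $$ (i,j) \<le> 0" using off i j by auto
          ultimately show ?thesis by (simp add: mult_nonpos_nonneg)
        qed
      qed
      finally have "0 \<le> M $$ (i,i) * v $ i" by simp
      moreover have "M $$ (i,i) > 0" using dpos i by simp
      ultimately show "v $ i \<ge> 0" by (simp add: zero_le_mult_iff)
    qed
  qed
  thus "\<forall>i<m. v $ i \<ge> 0" by blast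
qed

definition keepJ :: "nat \<Rightarrow> nat \<Rightarrow> bool" where "keepJ i j = (i = j)"
definition keepGS :: "nat \<Rightarrow> nat \<Rightarrow> bool" where "keepGS i j = (j \<le> i)"
definition keepAGS :: "nat \<Rightarrow> nat \<Rightarrow> bool" where "keepAGS i j = (i \<le> j)"
definition keepS1 :: "nat \<Rightarrow> nat \<Rightarrow> bool" where
  "keepS1 i j = (\<not> (i \<noteq> j \<and> odd (i + 1)) \<and> i \<le> j + 1 \<and> j \<le> i + 1)"
definition keepS2 :: "nat \<Rightarrow> nat \<Rightarrow> bool" where
  "keepS2 i j = (\<not> (i \<noteq> j \<and> even (i + 1)) \<and> i \<le> j + 1 \<and> j \<le> i + 1)"

lemma X_J: "diag_part B = MKg keepJ B"
  unfolding diag_part_def MKg_def keepJ_def by (intro eq_matI) auto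
lemma X_GS: "tril B = MKg keepGS B"
  unfolding tril_def MKg_def keepGS_def by (intro eq_matI) auto
lemma X_AGS: "triu B = MKg keepAGS B"
  unfolding triu_def MKg_def keepAGS_def by (intro eq_matI) auto
lemma X_S1: "stair1 B = MKg keepS1 B"
  unfolding stair1_def tridiag_def MKg_def keepS1_def by (intro eq_matI) auto
lemma X_S2: "stair2 B = MKg keepS2 B"
  unfolding stair2_def tridiag_def MKg_def keepS2_def by (intro eq_matI) auto

definition fK :: "(nat \<Rightarrow> nat \<Rightarrow> bool) \<Rightarrow> real \<Rightarrow> nat \<Rightarrow> nat \<Rightarrow> real" where
  "fK K al i j = (if K i j then al else 1)"

context setting
begin

lemma pencil_iff: "pencil K lam \<longleftrightarrow> (\<exists>u \<in> carrier_vec m. u \<noteq> 0\<^sub>v m \<and>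
   (\<forall>i<m. (\<Sum>j<m. complex_of_real (A $$ (i,j)) * u $ j) = (1 - lam) * (\<Sum>j<m. complex_of_real (MKg K B $$ (i,j)) * u $ j)))"
proof -
  have MKc: "map_mat complex_of_real (MKg K B) \<in> carrier_mat m m" using MK[of K] by simp
  have N0: "MKg K B - B \<in> carrier_mat m m" by (rule minus_carrier_mat[OF B])
  have Nc: "map_mat complex_of_real (MKg K B - B) \<in> carrier_mat m m" using N0 by simp
  have eq: "(map_mat complex_of_real (MKg K B - B) *\<^sub>v u = lam \<cdot>\<^sub>v (map_mat complex_of_real (MKg K B) *\<^sub>v u)) \<longleftrightarrow>
     (\<forall>i<m. (\<Sum>j<m. complex_of_real (A $$ (i,j)) * u $ j) = (1 - lam) * (\<Sum>j<m. complex_of_real (MKg K B $$ (i,j)) * u $ j))"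
    if u: "u \<in> carrier_vec m" for u
  proof -
    have e1: "(map_mat complex_of_real (MKg K B - B) *\<^sub>v u) $ i =
        (\<Sum>j<m. complex_of_real (MKg K B $$ (i,j)) * u $ j) - (\<Sum>j<m. complex_of_real (A $$ (i,j)) * u $ j)"
      if i: "i < m" for i
      unfolding mv_sum[OF Nc u i] using MK[of K] B B_idx i
      by (simp add: sum_subtractf algebra_simps)
    have e2: "(map_mat complex_of_real (MKg K B) *\<^sub>v u) $ i = (\<Sum>j<m. complex_of_real (MKg K B $$ (i,j)) * u $ j)"
      if i: "i < m" for i
      unfolding mv_sum[OF MKc u i] using MK[of K] i by simp
    show ?thesis
    proof
      assume h: "map_mat complex_of_real (MKg K B - B) *\<^sub>v u = lam \<cdot>\<^sub>v (map_mat complex_of_real (MKg K B) *\<^sub>v u)"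
      show "\<forall>i<m. (\<Sum>j<m. complex_of_real (A $$ (i,j)) * u $ j) = (1 - lam) * (\<Sum>j<m. complex_of_real (MKg K B $$ (i,j)) * u $ j)"
      proof (intro allI impI)
        fix i assume i: "i < m"
        define a where "a = (\<Sum>j<m. complex_of_real (A $$ (i,j)) * u $ j)"
        define mk where "mk = (\<Sum>j<m. complex_of_real (MKg K B $$ (i,j)) * u $ j)"
        have "(map_mat complex_of_real (MKg K B - B) *\<^sub>v u) $ i = (lam \<cdot>\<^sub>v (map_mat complex_of_real (MKg K B) *\<^sub>v u)) $ i"
          using h by simp
        also have "\<dots> = lam * (map_mat complex_of_real (MKg K B) *\<^sub>v u) $ i" using i MK[of K] by simp
        finally have "mk - a = lam * mk" unfolding e1[OF i] e2[OF i] a_def mk_def .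
        hence "a = mk - lam * mk" by (simp add: algebra_simps)
        also have "\<dots> = (1 - lam) * mk" by (simp add: left_diff_distrib)
        finally show "(\<Sum>j<m. complex_of_real (A $$ (i,j)) * u $ j) = (1 - lam) * (\<Sum>j<m. complex_of_real (MKg K B $$ (i,j)) * u $ j)"
          unfolding a_def mk_def .
      qed
    next
      assume h: "\<forall>i<m. (\<Sum>j<m. complex_of_real (A $$ (i,j)) * u $ j) = (1 - lam) * (\<Sum>j<m. complex_of_real (MKg K B $$ (i,j)) * u $ j)"
      show "map_mat complex_of_real (MKg K B - B) *\<^sub>v u = lam \<cdot>\<^sub>v (map_mat complex_of_real (MKg K B) *\<^sub>v u)"
      proof (rule eq_vecI)
        fix i assume "i < dim_vec (lam \<cdot>\<^sub>v (map_mat complex_of_real (MKg K B) *\<^sub>v u))"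
        hence i: "i < m" using MK[of K] by simp
        define a where "a = (\<Sum>j<m. complex_of_real (A $$ (i,j)) * u $ j)"
        define mk where "mk = (\<Sum>j<m. complex_of_real (MKg K B $$ (i,j)) * u $ j)"
        have ha: "a = (1 - lam) * mk" using h i unfolding a_def mk_def by blast
        have "(map_mat complex_of_real (MKg K B - B) *\<^sub>v u) $ i = mk - a" unfolding e1[OF i] a_def mk_def ..
        also have "\<dots> = lam * mk" unfolding ha by (simp add: algebra_simps)
        also have "\<dots> = (lam \<cdot>\<^sub>v (map_mat complex_of_real (MKg K B) *\<^sub>v u)) $ i"
          using i MK[of K] e2[OF i] unfolding mk_def by simp
        finally show "(map_mat complex_of_real (MKg K B - B) *\<^sub>v u) $ i = (lam \<cdot>\<^sub>v (map_mat complex_of_real (MKg K B) *\<^sub>v u)) $ i" .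
      qed (use MK[of K] B in simp)
    qed
  qed
  show ?thesis unfolding pencil_def using eq by blast
qed


lemma spec_pencil:
  assumes KX: "X (lead_sub A) = MKg K B" and dK: "det (MKg K B) \<noteq> 0"
  and sp: "lam \<in> spectrum (map_mat complex_of_real (iter_mat X A))" and l1: "lam \<noteq> 1"
  shows "pencil K lam"
proof -
  obtain v where v: "v \<in> carrier_vec n" "v \<noteq> 0\<^sub>v n"
    and h: "\<forall>i<n. (if i < m then (\<Sum>j<n. complex_of_real (A $$ (i,j)) * v $ j) else 0) =
         (1 - lam) * (if i < m then (\<Sum>j<m. complex_of_real (MKg K B $$ (i,j)) * v $ j) else v $ m)"
    using reduction[where X=X and K=K, OF KX dK] sp by blast
  have "0 = (1 - lam) * v $ m" using h[rule_format, of m] nm by simp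
  hence vm: "v $ m = 0" using l1 by simp
  define u where "u = vec m (\<lambda>j. v $ j)"
  have u: "u \<in> carrier_vec m" unfolding u_def by simp
  have unz: "u \<noteq> 0\<^sub>v m"
  proof
    assume "u = 0\<^sub>v m"
    hence z: "\<forall>j<m. v $ j = 0" unfolding u_def by (metis index_vec index_zero_vec(1))
    have "v = 0\<^sub>v n"
    proof (rule eq_vecI)
      fix j assume "j < dim_vec (0\<^sub>v n :: complex vec)"
      hence "j < n" by simp
      hence "j < m \<or> j = m" using nm by auto
      thus "v $ j = 0\<^sub>v n $ j" using z vm \<open>j < n\<close> by auto
    qed (use v in simp)
    with v(2) show False by contradiction
  qed
  have "\<forall>i<m. (\<Sum>j<m. complex_of_real (A $$ (i,j)) * u $ j) = (1 - lam) * (\<Sum>j<m. complex_of_real (MKg K B $$ (i,j)) * u $ j)"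
  proof (intro allI impI)
    fix i assume i: "i < m"
    have "(\<Sum>j<n. complex_of_real (A $$ (i,j)) * v $ j) = (\<Sum>j<m. complex_of_real (A $$ (i,j)) * v $ j)"
      unfolding nm using vm by simp
    also have "\<dots> = (\<Sum>j<m. complex_of_real (A $$ (i,j)) * u $ j)" unfolding u_def by simp
    finally have l: "(\<Sum>j<n. complex_of_real (A $$ (i,j)) * v $ j) = (\<Sum>j<m. complex_of_real (A $$ (i,j)) * u $ j)" .
    have r: "(\<Sum>j<m. complex_of_real (MKg K B $$ (i,j)) * v $ j) = (\<Sum>j<m. complex_of_real (MKg K B $$ (i,j)) * u $ j)"
      unfolding u_def by simp
    show "(\<Sum>j<m. complex_of_real (A $$ (i,j)) * u $ j) = (1 - lam) * (\<Sum>j<m. complex_of_real (MKg K B $$ (i,j)) * u $ j)"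
      using h[rule_format, of i] i nm unfolding l r by simp
  qed
  thus ?thesis unfolding pencil_iff using u unz by blast
qed

lemma pencil_spec:
  assumes KX: "X (lead_sub A) = MKg K B" and dK: "det (MKg K B) \<noteq> 0"
  and pe: "pencil K lam"
  shows "lam \<in> spectrum (map_mat complex_of_real (iter_mat X A))"
proof -
  obtain u where u: "u \<in> carrier_vec m" "u \<noteq> 0\<^sub>v m"
    and h: "\<forall>i<m. (\<Sum>j<m. complex_of_real (A $$ (i,j)) * u $ j) = (1 - lam) * (\<Sum>j<m. complex_of_real (MKg K B $$ (i,j)) * u $ j)"
    using pe unfolding pencil_iff by blast
  define v where "v = vec n (\<lambda>j. if j < m then u $ j else 0)"
  have v: "v \<in> carrier_vec n" unfolding v_def by simp
  have vnz: "v \<noteq> 0\<^sub>v n"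
  proof
    assume z: "v = 0\<^sub>v n"
    have "u = 0\<^sub>v m"
    proof (rule eq_vecI)
      fix j assume "j < dim_vec (0\<^sub>v m :: complex vec)"
      hence j: "j < m" by simp
      have "v $ j = 0" using z j nm by simp
      thus "u $ j = 0\<^sub>v m $ j" using j nm unfolding v_def by simp
    qed (use u in simp)
    with u(2) show False by contradiction
  qed
  have vm: "v $ m = 0" unfolding v_def using nm by simp
  have "\<forall>i<n. (if i < m then (\<Sum>j<n. complex_of_real (A $$ (i,j)) * v $ j) else 0) =
         (1 - lam) * (if i < m then (\<Sum>j<m. complex_of_real (MKg K B $$ (i,j)) * v $ j) else v $ m)"
  proof (intro allI impI)
    fix i assume i: "i < n"
    show "(if i < m then (\<Sum>j<n. complex_of_real (A $$ (i,j)) * v $ j) else 0) =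
         (1 - lam) * (if i < m then (\<Sum>j<m. complex_of_real (MKg K B $$ (i,j)) * v $ j) else v $ m)"
    proof (cases "i < m")
      case True
      have l: "(\<Sum>j<n. complex_of_real (A $$ (i,j)) * v $ j) = (\<Sum>j<m. complex_of_real (A $$ (i,j)) * u $ j)"
        unfolding nm using vm by (simp add: v_def nm)
      have r: "(\<Sum>j<m. complex_of_real (MKg K B $$ (i,j)) * v $ j) = (\<Sum>j<m. complex_of_real (MKg K B $$ (i,j)) * u $ j)"
        unfolding v_def using nm by simp
      show ?thesis using True h l r by simp
    next
      case False thus ?thesis using vm by simp
    qed
  qed
  thus ?thesis using reduction[where X=X and K=K, OF KX dK] v vnz by blast
qed


lemma MK_prop:
  assumes Kd: "\<forall>i. K i i" and i: "i < m" and j: "j < m"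
  shows "MKg K B $$ (i,j) = (if K i j then A $$ (i,j) else 0)"
    and "i \<noteq> j \<Longrightarrow> MKg K B $$ (i,j) \<le> 0"
    and "MKg K B $$ (i,j) - A $$ (i,j) \<ge> 0"
    and "MKg K B $$ (i,i) = A $$ (i,i)"
proof -
  show e: "MKg K B $$ (i,j) = (if K i j then A $$ (i,j) else 0)" by (rule MK_idx[OF i j])
  have off: "i \<noteq> j \<Longrightarrow> A $$ (i,j) \<le> 0" using offA i j nm by auto
  show "i \<noteq> j \<Longrightarrow> MKg K B $$ (i,j) \<le> 0" using e off by auto
  show "MKg K B $$ (i,j) - A $$ (i,j) \<ge> 0"
  proof (cases "i = j")
    case True thus ?thesis using e Kd by simp
  next
    case False thus ?thesis using e off by auto
  qed
  show "MKg K B $$ (i,i) = A $$ (i,i)" using MK_idx[OF i i] Kd by simp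
qed

lemma semi_eq:
  assumes Kd: "\<forall>i. K i i" and i: "i < m"
  shows "al * (\<Sum>j<m. MKg K B $$ (i,j) * x j) - (\<Sum>j<m. (MKg K B $$ (i,j) - A $$ (i,j)) * x j)
       = (\<Sum>j<m. fK K al i j * A $$ (i,j) * x j)"
proof -
  have "al * (\<Sum>j<m. MKg K B $$ (i,j) * x j) - (\<Sum>j<m. (MKg K B $$ (i,j) - A $$ (i,j)) * x j)
      = (\<Sum>j<m. al * (MKg K B $$ (i,j) * x j) - (MKg K B $$ (i,j) - A $$ (i,j)) * x j)"
    by (simp add: sum_distrib_left sum_subtractf)
  also have "\<dots> = (\<Sum>j<m. fK K al i j * A $$ (i,j) * x j)"
  proof (rule sum.cong[OF refl])
    fix j assume "j \<in> {..<m}" hence j: "j < m" by simp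
    show "al * (MKg K B $$ (i,j) * x j) - (MKg K B $$ (i,j) - A $$ (i,j)) * x j = fK K al i j * A $$ (i,j) * x j"
      using MK_prop(1)[where K=K, OF Kd i j] unfolding fK_def by (cases "K i j") (auto simp: algebra_simps)
  qed
  finally show ?thesis .
qed

lemma P1K:
  assumes Kd: "\<forall>i. K i i" and al: "al > 0"
  and x: "\<forall>j<m. x j > 0" and semi: "\<forall>i<m. (\<Sum>j<m. fK K al i j * A $$ (i,j) * x j) > 0"
  and pe: "pencil K lam"
  shows "cmod lam < al"
proof -
  obtain u where u: "u \<in> carrier_vec m" "u \<noteq> 0\<^sub>v m"
    and h: "\<forall>i<m. (\<Sum>j<m. complex_of_real (A $$ (i,j)) * u $ j) = (1 - lam) * (\<Sum>j<m. complex_of_real (MKg K B $$ (i,j)) * u $ j)"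
    using pe unfolding pencil_iff by blast
  have nz: "\<exists>j<m. u $ j \<noteq> 0"
  proof (rule ccontr)
    assume "\<not> (\<exists>j<m. u $ j \<noteq> 0)"
    hence "u = 0\<^sub>v m" using u by (intro eq_vecI) auto
    with u(2) show False by contradiction
  qed
  show ?thesis
  proof (rule P1[where Mf = "\<lambda>i j. MKg K B $$ (i,j)" and Nf = "\<lambda>i j. MKg K B $$ (i,j) - A $$ (i,j)"
        and v = "\<lambda>j. u $ j" and x = x and m = m])
    show "\<forall>k<m. 0 \<le> MKg K B $$ (k,k)" using MK_prop(4)[where K=K, OF Kd] Adiag_pos nm
      by (metis less_SucI less_imp_le)
    show "\<forall>k<m. \<forall>j<m. j \<noteq> k \<longrightarrow> MKg K B $$ (k,j) \<le> 0" using MK_prop(2)[where K=K, OF Kd] by auto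
    show "\<forall>k<m. \<forall>j<m. 0 \<le> MKg K B $$ (k,j) - A $$ (k,j)" using MK_prop(3)[where K=K, OF Kd] by auto
    show "\<forall>j<m. 0 < x j" by (rule x)
    show "\<forall>k<m. 0 < al * (\<Sum>j<m. MKg K B $$ (k,j) * x j) - (\<Sum>j<m. (MKg K B $$ (k,j) - A $$ (k,j)) * x j)"
      using semi semi_eq[where K=K, OF Kd] by simp
    show "0 < al" by (rule al)
    show "\<forall>k<m. (\<Sum>j<m. complex_of_real (MKg K B $$ (k,j) - A $$ (k,j)) * u $ j) =
        lam * (\<Sum>j<m. complex_of_real (MKg K B $$ (k,j)) * u $ j)"
    proof (intro allI impI)
      fix k assume k: "k < m"
      have "(\<Sum>j<m. complex_of_real (MKg K B $$ (k,j) - A $$ (k,j)) * u $ j)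
          = (\<Sum>j<m. complex_of_real (MKg K B $$ (k,j)) * u $ j) - (\<Sum>j<m. complex_of_real (A $$ (k,j)) * u $ j)"
        by (simp add: sum_subtractf algebra_simps)
      also have "\<dots> = lam * (\<Sum>j<m. complex_of_real (MKg K B $$ (k,j)) * u $ j)"
        unfolding h[rule_format, OF k] by (simp add: algebra_simps)
      finally show "(\<Sum>j<m. complex_of_real (MKg K B $$ (k,j) - A $$ (k,j)) * u $ j) =
        lam * (\<Sum>j<m. complex_of_real (MKg K B $$ (k,j)) * u $ j)" .
    qed
    show "\<exists>j<m. u $ j \<noteq> 0" by (rule nz)
  qed
qed

lemma P2K:
  assumes Kd: "\<forall>i. K i i" and al: "al > 0"
  and mono: "\<forall>v \<in> carrier_vec m. (\<forall>i<m. (MKg K B *\<^sub>v v) $ i \<ge> 0) \<longrightarrow> (\<forall>i<m. v $ i \<ge> 0)"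
  and bound: "\<And>lam. pencil K lam \<Longrightarrow> cmod lam < al"
  shows "\<exists>x. (\<forall>j<m. x j > 0) \<and> (\<forall>i<m. (\<Sum>j<m. fK K al i j * A $$ (i,j) * x j) > 0)"
proof -
  have N0: "MKg K B - B \<in> carrier_mat m m" by (rule minus_carrier_mat[OF B])
  have m0: "m > 0" using m1 by simp
  have Moff: "\<forall>i<m. \<forall>j<m. i \<noteq> j \<longrightarrow> MKg K B $$ (i,j) \<le> 0" using MK_prop(2)[where K=K, OF Kd] by auto
  have Nnn: "\<forall>i<m. \<forall>j<m. (MKg K B - B) $$ (i,j) \<ge> 0"
    using MK_prop(3)[where K=K, OF Kd] B B_idx MK[of K] by auto
  have "\<exists>x \<in> carrier_vec m. (\<forall>i<m. x $ i > 0) \<and> (\<forall>i<m. ((al \<cdot>\<^sub>m MKg K B - (MKg K B - B)) *\<^sub>v x) $ i > 0)"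
  proof (rule P2[OF MK N0 m0 mono Moff Nnn al])
    fix lam v assume "v \<in> carrier_vec m" "v \<noteq> 0\<^sub>v m"
     "map_mat complex_of_real (MKg K B - B) *\<^sub>v v = lam \<cdot>\<^sub>v (map_mat complex_of_real (MKg K B) *\<^sub>v v)"
    thus "cmod lam < al" using bound[of lam] unfolding pencil_def by blast
  qed
  then obtain x where x: "x \<in> carrier_vec m" "\<forall>i<m. x $ i > 0" "\<forall>i<m. ((al \<cdot>\<^sub>m MKg K B - (MKg K B - B)) *\<^sub>v x) $ i > 0"
    by blast
  have e: "((al \<cdot>\<^sub>m MKg K B - (MKg K B - B)) *\<^sub>v x) $ i = (\<Sum>j<m. fK K al i j * A $$ (i,j) * x $ j)"
    if i: "i < m" for i
  proof -
    have C: "al \<cdot>\<^sub>m MKg K B - (MKg K B - B) \<in> carrier_mat m m" by (rule minus_carrier_mat[OF N0])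
    have "((al \<cdot>\<^sub>m MKg K B - (MKg K B - B)) *\<^sub>v x) $ i = (\<Sum>j<m. (al \<cdot>\<^sub>m MKg K B - (MKg K B - B)) $$ (i,j) * x $ j)"
      by (rule mv_sum[OF C x(1) i])
    also have "\<dots> = (\<Sum>j<m. al * (MKg K B $$ (i,j) * x $ j) - (MKg K B $$ (i,j) - A $$ (i,j)) * x $ j)"
      using i MK[of K] B B_idx by (intro sum.cong) (auto simp: algebra_simps)
    also have "\<dots> = al * (\<Sum>j<m. MKg K B $$ (i,j) * x $ j) - (\<Sum>j<m. (MKg K B $$ (i,j) - A $$ (i,j)) * x $ j)"
      by (simp add: sum_distrib_left sum_subtractf)
    also have "\<dots> = (\<Sum>j<m. fK K al i j * A $$ (i,j) * x $ j)" by (rule semi_eq[where K=K, OF Kd i])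
    finally show ?thesis .
  qed
  show ?thesis using x e by (intro exI[of _ "\<lambda>j. x $ j"]) auto
qed


lemma jac_bound:
  assumes pe: "pencil keepJ lam"
  shows "cmod lam < 1"
proof -
  obtain u where u: "u \<in> carrier_vec m" "u \<noteq> 0\<^sub>v m"
    and h: "\<forall>i<m. (\<Sum>j<m. complex_of_real (A $$ (i,j)) * u $ j) = (1 - lam) * (\<Sum>j<m. complex_of_real (MKg keepJ B $$ (i,j)) * u $ j)"
    using pe unfolding pencil_iff by blast
  have dsum: "(\<Sum>j<m. complex_of_real (MKg keepJ B $$ (i,j)) * u $ j) = complex_of_real (A $$ (i,i)) * u $ i"
    if i: "i < m" for i
  proof -
    have "(\<Sum>j<m. complex_of_real (MKg keepJ B $$ (i,j)) * u $ j) = (\<Sum>j<m. if j = i then complex_of_real (A $$ (i,i)) * u $ i else 0)"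
      using MK_idx[OF i] i unfolding keepJ_def by (intro sum.cong) auto
    also have "\<dots> = complex_of_real (A $$ (i,i)) * u $ i" using i by simp
    finally show ?thesis .
  qed
  define Z :: "complex mat" where "Z = mat m m (\<lambda>(i,j). complex_of_real (A $$ (i,j)) - (if i = j then (1 - lam) * complex_of_real (A $$ (i,i)) else 0))"
  have Z: "Z \<in> carrier_mat m m" unfolding Z_def by simp
  have Zsum: "(\<Sum>j<m. Z $$ (i,j) * f j) = (\<Sum>j<m. complex_of_real (A $$ (i,j)) * f j) - (1 - lam) * complex_of_real (A $$ (i,i)) * f i"
    if i: "i < m" for i f
  proof -
    have "(\<Sum>j<m. Z $$ (i,j) * f j) = (\<Sum>j<m. complex_of_real (A $$ (i,j)) * f j - (if j = i then (1 - lam) * complex_of_real (A $$ (i,i)) * f i else 0))"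
      unfolding Z_def using i by (intro sum.cong) (auto simp: algebra_simps)
    also have "\<dots> = (\<Sum>j<m. complex_of_real (A $$ (i,j)) * f j) - (1 - lam) * complex_of_real (A $$ (i,i)) * f i"
      using i by (simp add: sum_subtractf)
    finally show ?thesis .
  qed
  have Zsum2: "(\<Sum>i<m. Z $$ (i,j) * f i) = (\<Sum>i<m. complex_of_real (A $$ (i,j)) * f i) - (1 - lam) * complex_of_real (A $$ (j,j)) * f j"
    if j: "j < m" for j f
  proof -
    have "(\<Sum>i<m. Z $$ (i,j) * f i) = (\<Sum>i<m. complex_of_real (A $$ (i,j)) * f i - (if i = j then (1 - lam) * complex_of_real (A $$ (j,j)) * f j else 0))"
      unfolding Z_def using j by (intro sum.cong) (auto simp: algebra_simps)
    also have "\<dots> = (\<Sum>i<m. complex_of_real (A $$ (i,j)) * f i) - (1 - lam) * complex_of_real (A $$ (j,j)) * f j"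
      using j by (simp add: sum_subtractf)
    finally show ?thesis .
  qed
  have "Z *\<^sub>v u = 0\<^sub>v m"
  proof (rule eq_vecI)
    fix i assume "i < dim_vec (0\<^sub>v m :: complex vec)"
    hence i: "i < m" by simp
    have "(Z *\<^sub>v u) $ i = (\<Sum>j<m. Z $$ (i,j) * u $ j)" by (rule mv_sum[OF Z u(1) i])
    also have "\<dots> = 0" unfolding Zsum[OF i] using h[rule_format, OF i] dsum[OF i] by simp
    finally show "(Z *\<^sub>v u) $ i = 0\<^sub>v m $ i" using i by simp
  qed (use Z in simp)
  hence "det Z = 0" using det_0_iff_vec_prod_zero_field[OF Z] u by blast
  hence "det (transpose_mat Z) = 0" using det_transpose[OF Z] by simp
  then obtain w where w: "w \<in> carrier_vec m" "w \<noteq> 0\<^sub>v m" "transpose_mat Z *\<^sub>v w = 0\<^sub>v m"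
    using det_0_iff_vec_prod_zero_field[of "transpose_mat Z" m] Z by auto
  have ZT: "transpose_mat Z \<in> carrier_mat m m" using Z by simp
  have col: "(\<Sum>i<m. Z $$ (i,j) * w $ i) = 0" if j: "j < m" for j
  proof -
    have "0 = (transpose_mat Z *\<^sub>v w) $ j" using w(3) j by simp
    also have "\<dots> = (\<Sum>i<m. transpose_mat Z $$ (j,i) * w $ i)" by (rule mv_sum[OF ZT w(1) j])
    also have "\<dots> = (\<Sum>i<m. Z $$ (i,j) * w $ i)" using Z j by (intro sum.cong) auto
    finally show ?thesis by simp
  qed
  have nz: "\<exists>j<m. w $ j \<noteq> 0"
  proof (rule ccontr)
    assume "\<not> (\<exists>j<m. w $ j \<noteq> 0)"
    hence "w = 0\<^sub>v m" using w by (intro eq_vecI) auto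
    with w(2) show False by contradiction
  qed
  have eig: "\<forall>j<m. (\<Sum>i\<in>{..<m} - {j}. complex_of_real (- A $$ (i,j)) * w $ i) = lam * (complex_of_real (A $$ (j,j)) * w $ j)"
  proof (intro allI impI)
    fix j assume j: "j < m"
    have s: "(\<Sum>i<m. complex_of_real (A $$ (i,j)) * w $ i) = complex_of_real (A $$ (j,j)) * w $ j + (\<Sum>i\<in>{..<m} - {j}. complex_of_real (A $$ (i,j)) * w $ i)"
      using j by (simp add: sum.remove)
    have "(\<Sum>i<m. complex_of_real (A $$ (i,j)) * w $ i) - (1 - lam) * complex_of_real (A $$ (j,j)) * w $ j = 0"
      using col[OF j] unfolding Zsum2[OF j] .
    hence "(\<Sum>i\<in>{..<m} - {j}. complex_of_real (A $$ (i,j)) * w $ i) = - (lam * (complex_of_real (A $$ (j,j)) * w $ j))"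
      unfolding s by (simp add: algebra_simps add_eq_0_iff)
    thus "(\<Sum>i\<in>{..<m} - {j}. complex_of_real (- A $$ (i,j)) * w $ i) = lam * (complex_of_real (A $$ (j,j)) * w $ j)"
      by (simp add: sum_negf)
  qed
  show ?thesis
    by (rule JAC[where Af = "\<lambda>i j. A $$ (i,j)", OF nm colsum offA irr nz eig])
qed

lemma no_pencil1: "\<not> pencil K 1"
proof
  assume "pencil K 1"
  then obtain u where u: "u \<in> carrier_vec m" "u \<noteq> 0\<^sub>v m"
    and h: "\<forall>i<m. (\<Sum>j<m. complex_of_real (A $$ (i,j)) * u $ j) = (1 - 1) * (\<Sum>j<m. complex_of_real (MKg K B $$ (i,j)) * u $ j)"
    unfolding pencil_iff by blast
  have "pencil keepJ 1" unfolding pencil_iff using u h by auto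
  from jac_bound[OF this] show False by simp
qed

end

lemma gamma_facts:
  assumes P: "P \<in> carrier_mat n n"
  shows "gamma P \<ge> 0"
    and "lam \<in> spectrum (map_mat complex_of_real P) \<Longrightarrow> lam \<noteq> 1 \<Longrightarrow> cmod lam \<le> gamma P"
    and "0 \<le> g \<Longrightarrow> (\<forall>lam \<in> spectrum (map_mat complex_of_real P). lam \<noteq> 1 \<longrightarrow> cmod lam \<le> g) \<Longrightarrow> gamma P \<le> g"
    and "0 < g \<Longrightarrow> (\<forall>lam \<in> spectrum (map_mat complex_of_real P). lam \<noteq> 1 \<longrightarrow> cmod lam < g) \<Longrightarrow> gamma P < g"
proof -
  have Pc: "map_mat complex_of_real P \<in> carrier_mat n n" using P by simp
  have fin: "finite (insert 0 (cmod ` (spectrum (map_mat complex_of_real P) - {1})))"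
    using card_finite_spectrum(1)[OF Pc] by simp
  show "gamma P \<ge> 0" unfolding gamma_def using fin by (simp add: Max_ge)
  show "lam \<in> spectrum (map_mat complex_of_real P) \<Longrightarrow> lam \<noteq> 1 \<Longrightarrow> cmod lam \<le> gamma P"
    unfolding gamma_def using fin by (intro Max_ge) auto
  show "0 \<le> g \<Longrightarrow> (\<forall>lam \<in> spectrum (map_mat complex_of_real P). lam \<noteq> 1 \<longrightarrow> cmod lam \<le> g) \<Longrightarrow> gamma P \<le> g"
    unfolding gamma_def using fin by (subst Max_le_iff) auto
  show "0 < g \<Longrightarrow> (\<forall>lam \<in> spectrum (map_mat complex_of_real P). lam \<noteq> 1 \<longrightarrow> cmod lam < g) \<Longrightarrow> gamma P < g"
    unfolding gamma_def using fin by (subst Max_less_iff) auto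
qed

lemma cond_lemma:
  fixes q :: real and ej ei eX eY :: nat
  assumes q: "q \<ge> 1" and le: "ej + eX \<le> ei + eY"
  shows "(1/q) ^ eY * q ^ ej \<le> (1/q) ^ eX * q ^ ei"
proof -
  have q0: "q > 0" using q by simp
  have l: "(1/q) ^ eY * q ^ ej = q ^ (ej + eX) / q ^ (eX + eY)" using q0
    by (simp add: power_add power_one_over field_simps)
  have r: "(1/q) ^ eX * q ^ ei = q ^ (ei + eY) / q ^ (eX + eY)" using q0
    by (simp add: power_add power_one_over field_simps)
  have "q ^ (ej + eX) \<le> q ^ (ei + eY)" by (rule power_increasing[OF le q])
  thus ?thesis unfolding l r using q0 by (simp add: divide_right_mono)
qed

lemma fK_pow: "al = 1 / q \<Longrightarrow> fK K al i j = (1/q) ^ (if K i j then 1 else 0)"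
  unfolding fK_def by simp

context setting
begin

lemma iter_carrier:
  assumes KX: "X (lead_sub A) = MKg K B" and dK: "det (MKg K B) \<noteq> 0"
  shows "iter_mat X A \<in> carrier_mat n n"
proof -
  define L where "L = Lmat n"
  have Lc: "L \<in> carrier_mat n n" unfolding L_def by (rule L)
  obtain WL where WL: "mat_inverse L = Some WL" "WL \<in> carrier_mat n n" "L * WL = 1\<^sub>m n" "WL * L = 1\<^sub>m n"
    using inverse_exists[OF Lc] det_L unfolding L_def by auto
  define bk where "bk = blk n (MKg K B)"
  have bk: "bk \<in> carrier_mat n n" unfolding bk_def by (rule blk_carrier)
  define M' where "M' = WL * bk"
  have M': "M' \<in> carrier_mat n n" unfolding M'_def using WL bk by simp
  have dimA: "dim_row A = n" using A by simp
  have Mp: "Mprime X A = M'" unfolding Mprime_def M'_def bk_def mat_inv_def dimA KX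
    using WL L_def by simp
  have "det L * det WL = 1" using det_mult[OF Lc WL(2)] WL(3) by simp
  hence dWL: "det WL \<noteq> 0" by auto
  have "det M' = det WL * det bk" unfolding M'_def by (rule det_mult[OF WL(2) bk])
  hence dM': "det M' \<noteq> 0" using dWL dK det_blk unfolding bk_def by simp
  obtain W' where W': "mat_inverse M' = Some W'" "W' \<in> carrier_mat n n" "M' * W' = 1\<^sub>m n" "W' * M' = 1\<^sub>m n"
    using inverse_exists[OF M' dM'] by auto
  have G: "iter_mat X A = W' * (M' - A)" unfolding iter_mat_def Mp mat_inv_def using W' by simp
  have MAc: "M' - A \<in> carrier_mat n n" using A by (rule minus_carrier_mat)
  show ?thesis unfolding G using W'(2) MAc by simp
qed

lemma mono_K:
  assumes Kd: "\<forall>i. K i i" and rank: "\<forall>i<m. \<forall>j<m. i \<noteq> j \<longrightarrow> K i j \<longrightarrow> rk j < (rk i :: nat)"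
  shows "\<forall>v \<in> carrier_vec m. (\<forall>i<m. (MKg K B *\<^sub>v v) $ i \<ge> 0) \<longrightarrow> (\<forall>i<m. v $ i \<ge> 0)"
proof (rule mono_rank[OF MK, of _ rk])
  show "\<forall>i<m. MKg K B $$ (i,i) > 0" using MK_prop(4)[where K=K, OF Kd] Adiag_pos nm by simp
  show "\<forall>i<m. \<forall>j<m. i \<noteq> j \<longrightarrow> MKg K B $$ (i,j) \<le> 0" using MK_prop(2)[where K=K, OF Kd] by auto
  show "\<forall>i<m. \<forall>j<m. i \<noteq> j \<longrightarrow> MKg K B $$ (i,j) \<noteq> 0 \<longrightarrow> rk j < rk i"
    using MK_prop(1)[where K=K, OF Kd] rank by auto
qed

lemma compare_gamma:
  assumes KXd: "\<forall>i. KX i i" and KYd: "\<forall>i. KY i i"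
  and X: "X (lead_sub A) = MKg KX B" and Y: "Y (lead_sub A) = MKg KY B"
  and dX: "det (MKg KX B) \<noteq> 0" and dY: "det (MKg KY B) \<noteq> 0"
  and monoX: "\<forall>v \<in> carrier_vec m. (\<forall>i<m. (MKg KX B *\<^sub>v v) $ i \<ge> 0) \<longrightarrow> (\<forall>i<m. v $ i \<ge> 0)"
  and gX: "gamma (iter_mat X A) < 1"
  and cmp: "\<And>al x. 0 < al \<Longrightarrow> al < 1 \<Longrightarrow> (\<forall>j<m. x j > 0) \<Longrightarrow>
     (\<forall>i<m. (\<Sum>j<m. fK KX al i j * A $$ (i,j) * x j) > 0) \<Longrightarrow>
     \<exists>y. (\<forall>j<m. y j > 0) \<and> (\<forall>i<m. (\<Sum>j<m. fK KY al i j * A $$ (i,j) * y j) > 0)"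
  shows "gamma (iter_mat Y A) \<le> gamma (iter_mat X A)"
proof -
  define g where "g = gamma (iter_mat X A)"
  have GX: "iter_mat X A \<in> carrier_mat n n" by (rule iter_carrier[where X=X and K=KX, OF X dX])
  have GY: "iter_mat Y A \<in> carrier_mat n n" by (rule iter_carrier[where X=Y and K=KY, OF Y dY])
  have g0: "g \<ge> 0" unfolding g_def by (rule gamma_facts(1)[OF GX])
  have g1: "g < 1" unfolding g_def by (rule gX)
  show ?thesis unfolding g_def[symmetric]
  proof (rule gamma_facts(3)[OF GY g0], intro ballI impI)
    fix lam assume sp: "lam \<in> spectrum (map_mat complex_of_real (iter_mat Y A))" and l1: "lam \<noteq> 1"
    show "cmod lam \<le> g"
    proof (rule ccontr)
      assume "\<not> cmod lam \<le> g"
      hence gl: "g < cmod lam" by simp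
      define al where "al = (g + min (cmod lam) 1) / 2"
      have al: "0 < al" "al < 1" "g < al" "al < cmod lam" unfolding al_def using g0 g1 gl by auto
      have bound: "cmod mu < al" if pe: "pencil KX mu" for mu
      proof -
        have "mu \<noteq> 1" using pe no_pencil1 by blast
        moreover have "mu \<in> spectrum (map_mat complex_of_real (iter_mat X A))"
          by (rule pencil_spec[where X=X and K=KX, OF X dX pe])
        ultimately have "cmod mu \<le> g" unfolding g_def using gamma_facts(2)[OF GX] by blast
        thus ?thesis using al by simp
      qed
      obtain x where x: "\<forall>j<m. x j > 0" "\<forall>i<m. (\<Sum>j<m. fK KX al i j * A $$ (i,j) * x j) > 0"
        using P2K[where K=KX, OF KXd al(1) monoX bound] by blast
      obtain y where y: "\<forall>j<m. y j > 0" "\<forall>i<m. (\<Sum>j<m. fK KY al i j * A $$ (i,j) * y j) > 0"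
        using cmp[OF al(1,2) x] by blast
      have "pencil KY lam" by (rule spec_pencil[where X=Y and K=KY, OF Y dY sp l1])
      from P1K[where K=KY, OF KYd al(1) y this] have "cmod lam < al" .
      with al(4) show False by simp
    qed
  qed
qed

lemma cmp_gen:
  assumes KXd: "\<forall>i. KX i i" and KYd: "\<forall>i. KY i i"
  and al: "0 < al" "al < 1"
  and arith: "\<forall>i<m. \<forall>j<m. j \<noteq> i \<longrightarrow> j \<le> i + 1 \<longrightarrow>
      e j + (if KX i j then 1 else 0) \<le> e i + (if KY i j then (1::nat) else 0)"
  and x: "\<forall>j<m. x j > 0" and semi: "\<forall>i<m. (\<Sum>j<m. fK KX al i j * A $$ (i,j) * x j) > 0"
  shows "\<exists>y. (\<forall>j<m. y j > 0) \<and> (\<forall>i<m. (\<Sum>j<m. fK KY al i j * A $$ (i,j) * y j) > 0)"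
proof -
  define q where "q = 1 / al"
  have q: "q \<ge> 1" unfolding q_def using al by simp
  have alq: "al = 1 / q" unfolding q_def by simp
  show ?thesis
  proof (rule compare[where Bf = "\<lambda>i j. A $$ (i,j)" and fX = "fK KX al" and fY = "fK KY al"
      and r = "\<lambda>j. q ^ e j"])
    show "\<forall>i<m. \<forall>j<m. j \<noteq> i \<longrightarrow> A $$ (i,j) \<le> 0" using offA nm by auto
    show "\<forall>i<m. \<forall>j<m. j > i + 1 \<longrightarrow> A $$ (i,j) = 0" using hess nm by auto
    show "\<forall>i<m. fK KX al i i = fK KY al i i" using KXd KYd unfolding fK_def by simp
    show "\<forall>j<m. q ^ e j > 0" using q by simp
    show "\<forall>i<m. \<forall>j<m. j \<noteq> i \<longrightarrow> j \<le> i + 1 \<longrightarrow> fK KY al i j * q ^ e j \<le> fK KX al i j * q ^ e i"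
    proof (intro allI impI)
      fix i j assume ij: "i < m" "j < m" "j \<noteq> i" "j \<le> i + 1"
      show "fK KY al i j * q ^ e j \<le> fK KX al i j * q ^ e i"
        unfolding fK_pow[OF alq] by (rule cond_lemma[OF q]) (use arith ij in blast)
    qed
    show "\<forall>j<m. x j > 0" by (rule x)
    show "\<forall>i<m. (\<Sum>j<m. fK KX al i j * A $$ (i,j) * x j) > 0" by (rule semi)
  qed
qed

end

lemma ar_J_GS: "j \<noteq> i \<Longrightarrow> j \<le> i + 1 \<Longrightarrow>
  (0::nat) + (if keepJ i j then 1 else 0) \<le> 0 + (if keepGS i j then 1 else 0)"
  unfolding keepJ_def by simp
lemma ar_GS_S1: "j \<noteq> i \<Longrightarrow> j \<le> i + 1 \<Longrightarrow>
  j div 2 + (if keepGS i j then 1 else 0) \<le> i div 2 + (if keepS1 i j then (1::nat) else 0)"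
  unfolding keepGS_def keepS1_def by presburger
lemma ar_GS_S2: "j \<noteq> i \<Longrightarrow> j \<le> i + 1 \<Longrightarrow>
  (j + 1) div 2 + (if keepGS i j then 1 else 0) \<le> (i + 1) div 2 + (if keepS2 i j then (1::nat) else 0)"
  unfolding keepGS_def keepS2_def by presburger
lemma ar_S1_AGS: "j \<noteq> i \<Longrightarrow> j \<le> i + 1 \<Longrightarrow>
  (j + 1) div 2 + (if keepS1 i j then 1 else 0) \<le> (i + 1) div 2 + (if keepAGS i j then (1::nat) else 0)"
  unfolding keepAGS_def keepS1_def by presburger
lemma ar_S2_AGS: "j \<noteq> i \<Longrightarrow> j \<le> i + 1 \<Longrightarrow>
  j div 2 + (if keepS2 i j then 1 else 0) \<le> i div 2 + (if keepAGS i j then (1::nat) else 0)"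
  unfolding keepAGS_def keepS2_def by presburger

context setting
begin

lemma final_chain:
  assumes S: "S = stair1 \<or> S = stair2"
  shows "gamma (iter_mat diag_part A) \<ge> gamma (iter_mat tril A)
       \<and> gamma (iter_mat tril A) \<ge> gamma (iter_mat S A)
       \<and> gamma (iter_mat S A) \<ge> gamma (iter_mat triu A)"
proof -
  have dJ: "\<forall>i. keepJ i i" unfolding keepJ_def by simp
  have dGS: "\<forall>i. keepGS i i" unfolding keepGS_def by simp
  have dAGS: "\<forall>i. keepAGS i i" unfolding keepAGS_def by simp
  have dS1: "\<forall>i. keepS1 i i" unfolding keepS1_def by simp
  have dS2: "\<forall>i. keepS2 i i" unfolding keepS2_def by simp
  have mJ: "\<forall>v \<in> carrier_vec m. (\<forall>i<m. (MKg keepJ B *\<^sub>v v) $ i \<ge> 0) \<longrightarrow> (\<forall>i<m. v $ i \<ge> 0)"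
    by (rule mono_K[where K=keepJ and rk="\<lambda>i. i", OF dJ]) (auto simp: keepJ_def)
  have mGS: "\<forall>v \<in> carrier_vec m. (\<forall>i<m. (MKg keepGS B *\<^sub>v v) $ i \<ge> 0) \<longrightarrow> (\<forall>i<m. v $ i \<ge> 0)"
    by (rule mono_K[where K=keepGS and rk="\<lambda>i. i", OF dGS]) (auto simp: keepGS_def)
  have mAGS: "\<forall>v \<in> carrier_vec m. (\<forall>i<m. (MKg keepAGS B *\<^sub>v v) $ i \<ge> 0) \<longrightarrow> (\<forall>i<m. v $ i \<ge> 0)"
    by (rule mono_K[where K=keepAGS and rk="\<lambda>i. m - i", OF dAGS]) (auto simp: keepAGS_def)
  have mS1: "\<forall>v \<in> carrier_vec m. (\<forall>i<m. (MKg keepS1 B *\<^sub>v v) $ i \<ge> 0) \<longrightarrow> (\<forall>i<m. v $ i \<ge> 0)"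
    by (rule mono_K[where K=keepS1 and rk="\<lambda>i. if odd i then 1 else 0", OF dS1]) (auto simp: keepS1_def; presburger)
  have mS2: "\<forall>v \<in> carrier_vec m. (\<forall>i<m. (MKg keepS2 B *\<^sub>v v) $ i \<ge> 0) \<longrightarrow> (\<forall>i<m. v $ i \<ge> 0)"
    by (rule mono_K[where K=keepS2 and rk="\<lambda>i. if even i then 1 else 0", OF dS2]) (auto simp: keepS2_def; presburger)
  have detJ: "det (MKg keepJ B) \<noteq> 0" by (rule mono_det[OF MK mJ])
  have detGS: "det (MKg keepGS B) \<noteq> 0" by (rule mono_det[OF MK mGS])
  have detAGS: "det (MKg keepAGS B) \<noteq> 0" by (rule mono_det[OF MK mAGS])
  have detS1: "det (MKg keepS1 B) \<noteq> 0" by (rule mono_det[OF MK mS1])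
  have detS2: "det (MKg keepS2 B) \<noteq> 0" by (rule mono_det[OF MK mS2])
  have XJ: "diag_part (lead_sub A) = MKg keepJ B" by (rule X_J)
  have XGS: "tril (lead_sub A) = MKg keepGS B" by (rule X_GS)
  have XAGS: "triu (lead_sub A) = MKg keepAGS B" by (rule X_AGS)
  have XS1: "stair1 (lead_sub A) = MKg keepS1 B" by (rule X_S1)
  have XS2: "stair2 (lead_sub A) = MKg keepS2 B" by (rule X_S2)
  have GJ: "iter_mat diag_part A \<in> carrier_mat n n" by (rule iter_carrier[where X=diag_part and K=keepJ, OF XJ detJ])
  have gJ: "gamma (iter_mat diag_part A) < 1"
  proof (rule gamma_facts(4)[OF GJ], simp, intro ballI impI)
    fix lam assume "lam \<in> spectrum (map_mat complex_of_real (iter_mat diag_part A))" "lam \<noteq> 1"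
    from spec_pencil[where X=diag_part and K=keepJ, OF XJ detJ this] show "cmod lam < 1" by (rule jac_bound)
  qed
  have c1: "gamma (iter_mat tril A) \<le> gamma (iter_mat diag_part A)"
  proof (rule compare_gamma[where X=diag_part and Y=tril and KX=keepJ and KY=keepGS, OF dJ dGS XJ XGS detJ detGS mJ gJ])
    fix al :: real and x assume "0 < al" "al < 1" "\<forall>j<m. x j > 0"
      "\<forall>i<m. (\<Sum>j<m. fK keepJ al i j * A $$ (i,j) * x j) > 0"
    thus "\<exists>y. (\<forall>j<m. y j > 0) \<and> (\<forall>i<m. (\<Sum>j<m. fK keepGS al i j * A $$ (i,j) * y j) > 0)"
      by (intro cmp_gen[where e = "\<lambda>j. 0" and KX=keepJ and KY=keepGS, OF dJ dGS]) (auto dest: ar_J_GS)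
  qed
  have gGS: "gamma (iter_mat tril A) < 1" using c1 gJ by simp
  have c2: "gamma (iter_mat S A) \<le> gamma (iter_mat tril A)"
  proof (cases "S = stair1")
    case True
    show ?thesis unfolding True
    proof (rule compare_gamma[where X=tril and Y=stair1 and KX=keepGS and KY=keepS1, OF dGS dS1 XGS XS1 detGS detS1 mGS gGS])
      fix al :: real and x assume "0 < al" "al < 1" "\<forall>j<m. x j > 0"
        "\<forall>i<m. (\<Sum>j<m. fK keepGS al i j * A $$ (i,j) * x j) > 0"
      thus "\<exists>y. (\<forall>j<m. y j > 0) \<and> (\<forall>i<m. (\<Sum>j<m. fK keepS1 al i j * A $$ (i,j) * y j) > 0)"
        by (intro cmp_gen[where e = "\<lambda>j. j div 2" and KX=keepGS and KY=keepS1, OF dGS dS1]) (auto dest: ar_GS_S1)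
    qed
  next
    case False
    hence S2: "S = stair2" using S by simp
    show ?thesis unfolding S2
    proof (rule compare_gamma[where X=tril and Y=stair2 and KX=keepGS and KY=keepS2, OF dGS dS2 XGS XS2 detGS detS2 mGS gGS])
      fix al :: real and x assume "0 < al" "al < 1" "\<forall>j<m. x j > 0"
        "\<forall>i<m. (\<Sum>j<m. fK keepGS al i j * A $$ (i,j) * x j) > 0"
      thus "\<exists>y. (\<forall>j<m. y j > 0) \<and> (\<forall>i<m. (\<Sum>j<m. fK keepS2 al i j * A $$ (i,j) * y j) > 0)"
        by (intro cmp_gen[where e = "\<lambda>j. (j + 1) div 2" and KX=keepGS and KY=keepS2, OF dGS dS2]) (auto dest: ar_GS_S2)
    qed
  qed
  have gS: "gamma (iter_mat S A) < 1" using c2 gGS by simp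
  have c3: "gamma (iter_mat triu A) \<le> gamma (iter_mat S A)"
  proof (cases "S = stair1")
    case True
    show ?thesis unfolding True
    proof (rule compare_gamma[where X=stair1 and Y=triu and KX=keepS1 and KY=keepAGS, OF dS1 dAGS XS1 XAGS detS1 detAGS mS1])
      show "gamma (iter_mat stair1 A) < 1" using gS True by simp
      fix al :: real and x assume "0 < al" "al < 1" "\<forall>j<m. x j > 0"
        "\<forall>i<m. (\<Sum>j<m. fK keepS1 al i j * A $$ (i,j) * x j) > 0"
      thus "\<exists>y. (\<forall>j<m. y j > 0) \<and> (\<forall>i<m. (\<Sum>j<m. fK keepAGS al i j * A $$ (i,j) * y j) > 0)"
        by (intro cmp_gen[where e = "\<lambda>j. (j + 1) div 2" and KX=keepS1 and KY=keepAGS, OF dS1 dAGS]) (auto dest: ar_S1_AGS)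
    qed
  next
    case False
    hence S2: "S = stair2" using S by simp
    show ?thesis unfolding S2
    proof (rule compare_gamma[where X=stair2 and Y=triu and KX=keepS2 and KY=keepAGS, OF dS2 dAGS XS2 XAGS detS2 detAGS mS2])
      show "gamma (iter_mat stair2 A) < 1" using gS S2 by simp
      fix al :: real and x assume "0 < al" "al < 1" "\<forall>j<m. x j > 0"
        "\<forall>i<m. (\<Sum>j<m. fK keepS2 al i j * A $$ (i,j) * x j) > 0"
      thus "\<exists>y. (\<forall>j<m. y j > 0) \<and> (\<forall>i<m. (\<Sum>j<m. fK keepAGS al i j * A $$ (i,j) * y j) > 0)"
        by (intro cmp_gen[where e = "\<lambda>j. j div 2" and KX=keepS2 and KY=keepAGS, OF dS2 dAGS]) (auto dest: ar_S2_AGS)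
    qed
  qed
  show ?thesis using c1 c2 c3 by simp
qed

end

theorem theorem6:
  fixes n :: nat and A T :: "real mat"
  assumes "n \<ge> 2"
    and "A \<in> carrier_mat n n" and "T \<in> carrier_mat n n"
    and "column_stochastic T" and "A = 1\<^sub>m n - T"
    and "irreducible_mat A" and "M_matrix A" and "det A = 0"
    and "lower_hessenberg A"
    and "S = stair1 \<or> S = stair2"
  shows "gamma (iter_mat diag_part A) \<ge> gamma (iter_mat tril A)
       \<and> gamma (iter_mat tril A) \<ge> gamma (iter_mat S A)
       \<and> gamma (iter_mat S A) \<ge> gamma (iter_mat triu A)"
proof -
  note n2 = assms(1) and Ac = assms(2) and Tc = assms(3) and cs = assms(4) and AT = assms(5)
    and irrA = assms(6) and hessA = assms(9) and S = assms(10)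
  have Aidx: "A $$ (i,j) = (if i = j then 1 else 0) - T $$ (i,j)" if "i < n" "j < n" for i j
    unfolding AT using that Tc by simp
  have Tnn: "T $$ (i,j) \<ge> 0" if "i < n" "j < n" for i j
    using cs that Tc unfolding column_stochastic_def nonneg_mat_def by auto
  have Tcol: "(\<Sum>i<n. T $$ (i,j)) = 1" if "j < n" for j
    using cs that Tc unfolding column_stochastic_def by auto
  interpret setting n "n - 1" A
  proof
    show "n = Suc (n - 1)" using n2 by simp
    show "n - 1 \<ge> 1" using n2 by simp
    show "A \<in> carrier_mat n n" by (rule Ac)
    show "\<forall>i<n. \<forall>j<n. i \<noteq> j \<longrightarrow> A $$ (i,j) \<le> 0" using Aidx Tnn by simp
    show "\<forall>j<n. (\<Sum>i<n. A $$ (i,j)) = 0"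
    proof (intro allI impI)
      fix j assume j: "j < n"
      have "(\<Sum>i<n. A $$ (i,j)) = (\<Sum>i<n. (if i = j then 1 else 0) - T $$ (i,j))"
        using Aidx j by (intro sum.cong) auto
      also have "\<dots> = 1 - (\<Sum>i<n. T $$ (i,j))" using j by (simp add: sum_subtractf)
      also have "\<dots> = 0" using Tcol j by simp
      finally show "(\<Sum>i<n. A $$ (i,j)) = 0" .
    qed
    show "\<not> (\<exists>I. I \<noteq> {} \<and> I \<subset> {0..<n} \<and> (\<forall>i\<in>I. \<forall>j\<in>{0..<n} - I. A $$ (i,j) = 0))"
      using irrA Ac unfolding irreducible_mat_def by simp
    show "\<forall>i<n. \<forall>j<n. j > i + 1 \<longrightarrow> A $$ (i,j) = 0"
      using hessA Ac unfolding lower_hessenberg_def by simp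
  qed
  show ?thesis by (rule final_chain[OF S])
qed

end
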